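(* Let $G$ be a finite group. Then $K(G)=G$ if and only if $G$ is abelian or $G$ is quasi-simple.
   Context: For $\chi\in\mathrm{Irr}(G)$, the center of $\chi$ is $Z(\chi)=\{g\in G : |\chi(g)|=\chi(1)\}$. For a nonabelian group $G$, let $\mathcal{X}=\{\chi\in\mathrm{Irr}(G) : Z(\chi)>Z(G)\}$ (strict containment) and define $K(G)=\bigcap_{\chi\in\mathcal{X}}\ker(\chi)$; if $G$ is abelian, set $K(G)=G$. A group $G$ is quasi-simple if $G'=G$ and $G/Z(G)$ is nonabelian simple. *)

theory Defs
  imports "HOL-Algebra.Algebra" "Jordan_Normal_Form.Matrix"
begin

definition mat_trace :: "complex mat \<Rightarrow> complex" where
  "mat_trace A = (\<Sum>i<dim_row A. A $$ (i, i))"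

definition is_rep :: "('a, 'b) monoid_scheme \<Rightarrow> nat \<Rightarrow> ('a \<Rightarrow> complex mat) \<Rightarrow> bool" where
  "is_rep G n \<rho> \<longleftrightarrow> n \<ge> 1
     \<and> (\<forall>g \<in> carrier G. \<rho> g \<in> carrier_mat n n)
     \<and> \<rho> \<one>\<^bsub>G\<^esub> = 1\<^sub>m n
     \<and> (\<forall>g \<in> carrier G. \<forall>h \<in> carrier G. \<rho> (g \<otimes>\<^bsub>G\<^esub> h) = \<rho> g * \<rho> h)"

definition is_subspace :: "nat \<Rightarrow> complex vec set \<Rightarrow> bool" where
  "is_subspace n W \<longleftrightarrow> W \<subseteq> carrier_vec n \<and> 0\<^sub>v n \<in> W
     \<and> (\<forall>v \<in> W. \<forall>w \<in> W. v + w \<in> W)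
     \<and> (\<forall>c. \<forall>v \<in> W. c \<cdot>\<^sub>v v \<in> W)"

definition is_irr_rep :: "('a, 'b) monoid_scheme \<Rightarrow> nat \<Rightarrow> ('a \<Rightarrow> complex mat) \<Rightarrow> bool" where
  "is_irr_rep G n \<rho> \<longleftrightarrow> is_rep G n \<rho>
     \<and> (\<forall>W. is_subspace n W \<and> (\<forall>g \<in> carrier G. \<forall>w \<in> W. \<rho> g *\<^sub>v w \<in> W)
            \<longrightarrow> W = {0\<^sub>v n} \<or> W = carrier_vec n)"

definition Irr :: "('a, 'b) monoid_scheme \<Rightarrow> ('a \<Rightarrow> complex) set" where
  "Irr G = {\<chi>. \<exists>n \<rho>. is_irr_rep G n \<rho>
              \<and> \<chi> = (\<lambda>g. if g \<in> carrier G then mat_trace (\<rho> g) else 0)}"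

definition char_center :: "('a, 'b) monoid_scheme \<Rightarrow> ('a \<Rightarrow> complex) \<Rightarrow> 'a set" where
  "char_center G \<chi> = {g \<in> carrier G. complex_of_real (cmod (\<chi> g)) = \<chi> \<one>\<^bsub>G\<^esub>}"

definition char_ker :: "('a, 'b) monoid_scheme \<Rightarrow> ('a \<Rightarrow> complex) \<Rightarrow> 'a set" where
  "char_ker G \<chi> = {g \<in> carrier G. \<chi> g = \<chi> \<one>\<^bsub>G\<^esub>}"

definition group_center :: "('a, 'b) monoid_scheme \<Rightarrow> 'a set" where
  "group_center G = {z \<in> carrier G. \<forall>g \<in> carrier G. z \<otimes>\<^bsub>G\<^esub> g = g \<otimes>\<^bsub>G\<^esub> z}"

definition K_grp :: "('a, 'b) monoid_scheme \<Rightarrow> 'a set" where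
  "K_grp G = (if comm_group G then carrier G
     else carrier G \<inter> \<Inter>{char_ker G \<chi> | \<chi>. \<chi> \<in> Irr G \<and> group_center G \<subset> char_center G \<chi>})"

definition quasi_simple :: "('a, 'b) monoid_scheme \<Rightarrow> bool" where
  "quasi_simple G \<longleftrightarrow> derived G (carrier G) = carrier G
     \<and> simple_group (G Mod group_center G) \<and> \<not> comm_group (G Mod group_center G)"

end

theory Submission
  imports Defs "Jordan_Normal_Form.Jordan_Normal_Form_Existence" "Jordan_Normal_Form.VS_Connect"
begin

lemma mat_trace_mult_comm:
  assumes A: "A \<in> carrier_mat n m" and B: "B \<in> carrier_mat m n"
  shows "mat_trace (A * B) = mat_trace (B * A)"
proof -
  have "mat_trace (A * B) = (\<Sum>i<n. \<Sum>j<m. A $$ (i,j) * B $$ (j,i))"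
    using A B by (auto simp: mat_trace_def scalar_prod_def lessThan_atLeast0 intro!: sum.cong)
  also have "\<dots> = (\<Sum>j<m. \<Sum>i<n. B $$ (j,i) * A $$ (i,j))"
    by (subst sum.swap) (simp add: mult.commute)
  also have "\<dots> = mat_trace (B * A)"
    using A B by (auto simp: mat_trace_def scalar_prod_def lessThan_atLeast0 intro!: sum.cong)
  finally show ?thesis .
qed

lemma mat_trace_one: "mat_trace (1\<^sub>m n) = of_nat n"
  by (simp add: mat_trace_def)

lemma mat_trace_smult_one: "mat_trace (c \<cdot>\<^sub>m 1\<^sub>m n) = c * of_nat n"
  by (simp add: mat_trace_def)

lemma unit_sum_all_equal:
  fixes a :: "nat \<Rightarrow> complex"
  assumes m: "m > 0" and a: "\<And>i. i < m \<Longrightarrow> cmod (a i) = 1"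
    and s: "cmod (\<Sum>i<m. a i) = real m"
  shows "\<And>i. i < m \<Longrightarrow> a i = (\<Sum>i<m. a i) / of_nat m"
proof -
  define S where "S = (\<Sum>i<m. a i)"
  define c where "c = S / of_nat m"
  have cc: "cmod c = 1" using s m by (simp add: c_def S_def norm_divide)
  have ccnj: "c * cnj c = 1"
    using cc by (metis complex_norm_square mult.commute of_real_1 power_one)
  define b where "b i = a i * cnj c" for i
  have bnorm: "cmod (b i) = 1" if "i < m" for i using a[OF that] cc by (simp add: b_def norm_mult)
  have "(\<Sum>i<m. b i) = S * cnj c" by (simp add: b_def S_def sum_distrib_right)
  also have "\<dots> = of_nat m * (c * cnj c)" using m by (simp add: c_def)
  finally have sb: "(\<Sum>i<m. b i) = of_nat m" using ccnj by simp
  have "(\<Sum>i<m. Re (b i)) = real m" using arg_cong[OF sb, of Re] by (simp add: Re_sum)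
  hence "(\<Sum>i<m. 1 - Re (b i)) = 0" by (simp add: sum_subtractf)
  moreover have "\<forall>i\<in>{..<m}. 0 \<le> 1 - Re (b i)"
    using bnorm complex_Re_le_cmod by (metis diff_ge_0_iff_ge lessThan_iff)
  ultimately have re1: "Re (b i) = 1" if "i < m" for i
    using sum_nonneg_eq_0_iff[of "{..<m}" "\<lambda>i. 1 - Re (b i)"] that by auto
  have b1: "b i = 1" if "i < m" for i
  proof -
    have "(cmod (b i))\<^sup>2 = (Re (b i))\<^sup>2 + (Im (b i))\<^sup>2" by (rule cmod_power2)
    hence "Im (b i) = 0" using bnorm[OF that] re1[OF that] by simp
    thus ?thesis using re1[OF that] by (simp add: complex_eq_iff)
  qed
  fix i assume i: "i < m"
  have "a i = b i * c" unfolding b_def using ccnj by (simp add: mult.assoc mult.commute)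
  thus "a i = (\<Sum>i<m. a i) / of_nat m" using b1[OF i] by (simp add: c_def S_def)
qed

lemma jordan_pow_one:
  assumes "k > 0" "0 \<notin> fst ` set n_as"
    "jordan_matrix n_as ^\<^sub>m k = 1\<^sub>m (sum_list (map fst n_as))"
  shows "\<forall>(s,a)\<in>set n_as. s = 1 \<and> (a::complex) ^ k = 1"
  using assms(2-3)
proof (induct n_as)
  case Nil
  then show ?case by simp
next
  case (Cons sa rest)
  obtain s a where sa: "sa = (s,a)" by force
  let ?B = "jordan_block s a ^\<^sub>m k"
  let ?R = "jordan_matrix rest ^\<^sub>m k"
  let ?m = "sum_list (map fst rest)"
  have R: "?R \<in> carrier_mat ?m ?m" by (simp add: pow_carrier_mat)
  have B: "?B \<in> carrier_mat s s" by simp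
  have "jordan_matrix (sa # rest) ^\<^sub>m k = diag_block_mat (map (\<lambda>(n,a). jordan_block n a ^\<^sub>m k) (sa # rest))"
    by (rule jordan_matrix_pow)
  also have "\<dots> = four_block_mat ?B (0\<^sub>m s ?m) (0\<^sub>m ?m s) ?R"
    using R by (simp add: sa Let_def jordan_matrix_pow[symmetric])
  finally have eq: "four_block_mat ?B (0\<^sub>m s ?m) (0\<^sub>m ?m s) ?R = 1\<^sub>m (s + ?m)"
    using Cons(3) sa by simp
  have ent: "four_block_mat ?B (0\<^sub>m s ?m) (0\<^sub>m ?m s) ?R $$ (i,j) = (if i = j then 1 else 0)"
    if "i < s + ?m" "j < s + ?m" for i j
    using arg_cong[OF eq, of "\<lambda>M. M $$ (i,j)"] that by simp
  have Rone: "?R = 1\<^sub>m ?m"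
  proof (rule eq_matI)
    fix i j assume "i < dim_row (1\<^sub>m ?m)" "j < dim_col (1\<^sub>m ?m)"
    hence ij: "i < ?m" "j < ?m" by auto
    have "four_block_mat ?B (0\<^sub>m s ?m) (0\<^sub>m ?m s) ?R $$ (i + s, j + s) = ?R $$ (i, j)"
      using ij R B by (subst index_mat_four_block) auto
    thus "?R $$ (i,j) = 1\<^sub>m ?m $$ (i,j)" using ent[of "i+s" "j+s"] ij by simp
  qed (use R in auto)
  have IH: "\<forall>(s,a)\<in>set rest. s = 1 \<and> a ^ k = 1" using Cons Rone by auto
  have s0: "s \<noteq> 0" using Cons(2) sa by force
  have "?B $$ (0,0) = a ^ k" using s0 by (simp add: jordan_block_pow)
  moreover have "four_block_mat ?B (0\<^sub>m s ?m) (0\<^sub>m ?m s) ?R $$ (0,0) = ?B $$ (0,0)"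
    using s0 R B by (subst index_mat_four_block) auto
  ultimately have ak: "a ^ k = 1" using ent[of 0 0] s0 by simp
  have s1: "s = 1"
  proof (rule ccontr)
    assume "s \<noteq> 1"
    hence s2: "1 < s" using s0 by simp
    have "?B $$ (0,1) = of_nat k * a ^ (k - 1)" using s2 by (simp add: jordan_block_pow)
    moreover have "four_block_mat ?B (0\<^sub>m s ?m) (0\<^sub>m ?m s) ?R $$ (0,1) = ?B $$ (0,1)"
      using s2 R B by (subst index_mat_four_block) auto
    ultimately have "of_nat k * a ^ (k - 1) = 0" using ent[of 0 1] s2 by simp
    moreover have "a \<noteq> 0" using ak assms(1) by (metis power_0_left zero_neq_one not_gr0)
    ultimately show False using assms(1) by simp
  qed
  show ?case using IH s1 ak sa by auto
qed

lemma jordan_matrix_ones: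
  assumes "\<forall>(s,a)\<in>set n_as. s = 1"
  shows "jordan_matrix n_as = mat (length n_as) (length n_as) (\<lambda>(i,j). if i = j then snd (n_as ! i) else 0)"
  using assms
proof (induct n_as)
  case Nil
  show ?case by (rule eq_matI) (auto simp: jordan_matrix_def)
next
  case (Cons sa rest)
  obtain s a where sa: "sa = (s,a)" by force
  have s: "s = 1" using Cons sa by auto
  have m: "sum_list (map fst rest) = length rest" using Cons(2)
    by (induct rest) auto
  have IH: "jordan_matrix rest = mat (length rest) (length rest) (\<lambda>(i,j). if i = j then snd (rest ! i) else 0)"
    using Cons by auto
  show ?case
    unfolding sa s jordan_matrix_Cons m IH
    by (rule eq_matI) (auto simp: index_mat_four_block nth_Cons' jordan_block_def)
qed

lemma scalar_of_trace:
  fixes A :: "complex mat"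
  assumes A: "A \<in> carrier_mat n n" and n: "n > 0" and k: "k > 0" and pow: "A ^\<^sub>m k = 1\<^sub>m n"
    and tr: "cmod (mat_trace A) = real n"
  shows "\<exists>c. A = c \<cdot>\<^sub>m 1\<^sub>m n \<and> c ^ k = 1"
proof -
  obtain as where cp: "char_poly A = (\<Prod>a\<leftarrow>as. [:- a, 1:])" using char_poly_factorized[OF A] by auto
  obtain n_as where jnf: "jordan_nf A n_as" using jordan_nf_exists[OF A cp] by auto
  let ?J = "jordan_matrix n_as"
  have z: "0 \<notin> fst ` set n_as" and sim: "similar_mat A ?J" using jnf unfolding jordan_nf_def by auto
  obtain P Q where wit: "similar_mat_wit A ?J P Q" using sim unfolding similar_mat_def by auto
  have dA: "dim_row A = n" using A by simp
  have J: "?J \<in> carrier_mat n n" and P: "P \<in> carrier_mat n n" and Q: "Q \<in> carrier_mat n n"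
    and PQ: "P * Q = 1\<^sub>m n" and QP: "Q * P = 1\<^sub>m n" and AJ: "A = P * ?J * Q"
    using wit unfolding similar_mat_wit_def Let_def dA by auto
  have sz: "sum_list (map fst n_as) = n" using J by (metis carrier_matD(1) jordan_matrix_dim(1))
  have Jk: "?J ^\<^sub>m k \<in> carrier_mat n n" using J by (simp add: pow_carrier_mat)
  have "A ^\<^sub>m k = P * ?J ^\<^sub>m k * Q" by (rule similar_mat_wit_pow_id[OF wit])
  hence "Q * (A ^\<^sub>m k) * P = (Q * P) * ?J ^\<^sub>m k * (Q * P)"
    using P Q Jk by (simp add: assoc_mult_mat[of _ n n _ n _ n])
  hence "?J ^\<^sub>m k = 1\<^sub>m n" using QP PQ pow P Q Jk
    by (simp add: left_mult_one_mat[OF Jk] right_mult_one_mat[OF Jk])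
  hence props: "\<forall>(s,a)\<in>set n_as. s = 1 \<and> a ^ k = 1" using jordan_pow_one[OF k z] sz by simp
  have len: "length n_as = n" using sz props by (induct n_as arbitrary: n) auto
  have Jeq: "?J = mat n n (\<lambda>(i,j). if i = j then snd (n_as ! i) else 0)"
    using jordan_matrix_ones[of n_as] props len by auto
  have trJ: "mat_trace ?J = (\<Sum>i<n. snd (n_as ! i))" unfolding Jeq by (simp add: mat_trace_def)
  have JQP: "(?J * Q) * P = ?J"
  proof -
    have "(?J * Q) * P = ?J * (Q * P)" by (rule assoc_mult_mat[OF J Q P])
    also have "\<dots> = ?J" unfolding QP by (rule right_mult_one_mat[OF J])
    finally show ?thesis .
  qed
  have "mat_trace A = mat_trace (P * (?J * Q))" using AJ P J Q by (simp add: assoc_mult_mat[of _ n n _ n _ n])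
  also have "\<dots> = mat_trace ((?J * Q) * P)" using P J Q by (intro mat_trace_mult_comm) auto
  also have "\<dots> = mat_trace ?J" using JQP by simp
  finally have trA: "mat_trace A = (\<Sum>i<n. snd (n_as ! i))" using trJ by simp
  have unit: "cmod (snd (n_as ! i)) = 1 \<and> snd (n_as ! i) ^ k = 1" if "i < n" for i
  proof -
    have "n_as ! i \<in> set n_as" using that len by simp
    hence ak: "snd (n_as ! i) ^ k = 1" using props by auto
    hence "cmod (snd (n_as ! i)) ^ k = 1 ^ k" by (metis norm_power norm_one power_one)
    hence "cmod (snd (n_as ! i)) = 1" using k by (metis norm_ge_zero power_eq_imp_eq_base zero_le_one)
    with ak show ?thesis by simp
  qed
  define c where "c = (\<Sum>i<n. snd (n_as ! i)) / of_nat n"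
  have trs: "cmod (\<Sum>i<n. snd (n_as ! i)) = real n" using tr trA by simp
  have u1: "\<And>i. i < n \<Longrightarrow> cmod (snd (n_as ! i)) = 1" using unit by blast
  have all: "snd (n_as ! i) = c" if "i < n" for i
    unfolding c_def by (rule unit_sum_all_equal[OF n u1 trs that])
  have "?J = c \<cdot>\<^sub>m 1\<^sub>m n" unfolding Jeq by (rule eq_matI) (auto simp: all)
  hence "A = P * (c \<cdot>\<^sub>m 1\<^sub>m n) * Q" using AJ by simp
  also have "\<dots> = c \<cdot>\<^sub>m (P * Q)"
  proof -
    have "P * (c \<cdot>\<^sub>m 1\<^sub>m n) = c \<cdot>\<^sub>m (P * 1\<^sub>m n)" using P by (intro mult_smult_distrib) auto
    also have "\<dots> = c \<cdot>\<^sub>m P" using P by simp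
    finally have "P * (c \<cdot>\<^sub>m 1\<^sub>m n) * Q = (c \<cdot>\<^sub>m P) * Q" by simp
    also have "\<dots> = c \<cdot>\<^sub>m (P * Q)" using P Q by (intro mult_smult_assoc_mat) auto
    finally show ?thesis .
  qed
  also have "\<dots> = c \<cdot>\<^sub>m 1\<^sub>m n" using PQ by simp
  finally have "A = c \<cdot>\<^sub>m 1\<^sub>m n" .
  moreover have "c ^ k = 1" using unit[OF n] all[OF n] by simp
  ultimately show ?thesis by blast
qed


lemma mult_unit_vec_index:
  fixes A :: "complex mat"
  assumes A: "A \<in> carrier_mat n m" and i: "i < n" and j: "j < m"
  shows "(A *\<^sub>v unit_vec m j) $ i = A $$ (i,j)"
proof -
  have "(A *\<^sub>v unit_vec m j) $ i = (\<Sum>l\<in>{0..<m}. A $$ (i,l) * (if l = j then 1 else 0))"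
    using A i j by (simp add: scalar_prod_def)
  also have "\<dots> = A $$ (i,j)" using j by (simp add: if_distrib sum.delta' cong: if_cong)
  finally show ?thesis .
qed

lemma rep_carrier: "is_rep G n \<rho> \<Longrightarrow> g \<in> carrier G \<Longrightarrow> \<rho> g \<in> carrier_mat n n"
  unfolding is_rep_def by auto

lemma rep_mult: "is_rep G n \<rho> \<Longrightarrow> g \<in> carrier G \<Longrightarrow> h \<in> carrier G \<Longrightarrow> \<rho> (g \<otimes>\<^bsub>G\<^esub> h) = \<rho> g * \<rho> h"
  unfolding is_rep_def by auto

lemma rep_one: "is_rep G n \<rho> \<Longrightarrow> \<rho> \<one>\<^bsub>G\<^esub> = 1\<^sub>m n"
  unfolding is_rep_def by auto

lemma rep_pow:
  assumes grp: "group G" and rep: "is_rep G n \<rho>" and g: "g \<in> carrier G"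
  shows "\<rho> (g [^]\<^bsub>G\<^esub> (m::nat)) = \<rho> g ^\<^sub>m m"
proof (induct m)
  case 0
  then show ?case using rep_one[OF rep] rep_carrier[OF rep g] by simp
next
  case (Suc m)
  have "g [^]\<^bsub>G\<^esub> Suc m = g [^]\<^bsub>G\<^esub> m \<otimes>\<^bsub>G\<^esub> g" by (simp add: monoid.nat_pow_Suc[OF group.is_monoid[OF grp]])
  hence "\<rho> (g [^]\<^bsub>G\<^esub> Suc m) = \<rho> (g [^]\<^bsub>G\<^esub> m) * \<rho> g"
    using rep_mult[OF rep] g grp by (simp add: monoid.nat_pow_closed group.is_monoid)
  then show ?case using Suc by simp
qed

lemma rep_order_pow:
  assumes grp: "group G" and fin: "finite (carrier G)" and rep: "is_rep G n \<rho>" and g: "g \<in> carrier G"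
  shows "\<rho> g ^\<^sub>m card (carrier G) = 1\<^sub>m n"
proof -
  have "g [^]\<^bsub>G\<^esub> Coset.order G = \<one>\<^bsub>G\<^esub>" by (rule group.pow_order_eq_1[OF grp g])
  hence "\<rho> (g [^]\<^bsub>G\<^esub> card (carrier G)) = 1\<^sub>m n" using rep_one[OF rep] by (simp add: Coset.order_def)
  thus ?thesis using rep_pow[OF grp rep g] by simp
qed

lemma card_carrier_pos: "group G \<Longrightarrow> finite (carrier G) \<Longrightarrow> card (carrier G) > 0"
  by (metis card_gt_0_iff empty_iff group.is_monoid monoid.one_closed)

lemma rep_inv:
  assumes grp: "group G" and rep: "is_rep G n \<rho>" and g: "g \<in> carrier G"
  shows "\<rho> (inv\<^bsub>G\<^esub> g) * \<rho> g = 1\<^sub>m n" "\<rho> g * \<rho> (inv\<^bsub>G\<^esub> g) = 1\<^sub>m n"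
proof -
  have "\<rho> (inv\<^bsub>G\<^esub> g) * \<rho> g = \<rho> (inv\<^bsub>G\<^esub> g \<otimes>\<^bsub>G\<^esub> g)" using rep_mult[OF rep] g grp by simp
  thus "\<rho> (inv\<^bsub>G\<^esub> g) * \<rho> g = 1\<^sub>m n" using group.l_inv[OF grp g] rep_one[OF rep] by simp
  have "\<rho> g * \<rho> (inv\<^bsub>G\<^esub> g) = \<rho> (g \<otimes>\<^bsub>G\<^esub> inv\<^bsub>G\<^esub> g)" using rep_mult[OF rep] g grp by simp
  thus "\<rho> g * \<rho> (inv\<^bsub>G\<^esub> g) = 1\<^sub>m n" using group.r_inv[OF grp g] rep_one[OF rep] by simp
qed

lemma smult_one_pow: "(c \<cdot>\<^sub>m 1\<^sub>m n) ^\<^sub>m k = (c ^ k) \<cdot>\<^sub>m (1\<^sub>m n :: 'a::comm_ring_1 mat)"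
proof (induct k)
  case 0
  then show ?case by (rule eq_matI) auto
next
  case (Suc k)
  show ?case unfolding pow_mat.simps Suc by (rule eq_matI) (auto simp: scalar_prod_def if_distrib sum.delta' cong: if_cong)
qed

lemma schur_scalar:
  assumes irr: "is_irr_rep G n \<rho>" and g: "g \<in> carrier G"
    and comm: "\<And>h. h \<in> carrier G \<Longrightarrow> \<rho> g * \<rho> h = \<rho> h * \<rho> g"
  shows "\<exists>c. \<rho> g = c \<cdot>\<^sub>m 1\<^sub>m n"
proof -
  have rep: "is_rep G n \<rho>" using irr unfolding is_irr_rep_def by auto
  have irrW: "\<And>W. is_subspace n W \<Longrightarrow> (\<forall>h \<in> carrier G. \<forall>w \<in> W. \<rho> h *\<^sub>v w \<in> W) \<Longrightarrow> W = {0\<^sub>v n} \<or> W = carrier_vec n"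
    using irr unfolding is_irr_rep_def by auto
  have n: "n \<ge> 1" using rep unfolding is_rep_def by auto
  have car: "\<And>h. h \<in> carrier G \<Longrightarrow> \<rho> h \<in> carrier_mat n n" using rep_carrier[OF rep] .
  let ?A = "\<rho> g"
  have A: "?A \<in> carrier_mat n n" using car g .
  obtain as where cp: "char_poly ?A = (\<Prod>a\<leftarrow>as. [:-a,1:])" using char_poly_factorized[OF A] by auto
  have "as \<noteq> []"
  proof
    assume "as = []"
    hence "char_poly ?A = 1" using cp by simp
    thus False using degree_monic_char_poly[OF A] n by simp
  qed
  then obtain c where c: "c \<in> set as" by (meson list.set_sel(1))
  have "poly (char_poly ?A) c = 0" unfolding cp by (rule linear_poly_root[OF c])
  hence "eigenvalue ?A c" using eigenvalue_root_char_poly[OF A] by simp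
  then obtain v where v: "eigenvector ?A v c" unfolding eigenvalue_def by auto
  have vc: "v \<in> carrier_vec n" "v \<noteq> 0\<^sub>v n" "?A *\<^sub>v v = c \<cdot>\<^sub>v v" using v A unfolding eigenvector_def by auto
  define W where "W = {w \<in> carrier_vec n. ?A *\<^sub>v w = c \<cdot>\<^sub>v w}"
  have sub: "is_subspace n W"
    unfolding is_subspace_def
  proof (intro conjI ballI allI)
    show "W \<subseteq> carrier_vec n" unfolding W_def by auto
    show "0\<^sub>v n \<in> W" unfolding W_def using A by auto
  next
    fix x y assume x: "x \<in> W" and y: "y \<in> W"
    have "?A *\<^sub>v (x + y) = ?A *\<^sub>v x + ?A *\<^sub>v y" using x y A unfolding W_def by (auto simp: mult_add_distrib_mat_vec)
    also have "\<dots> = c \<cdot>\<^sub>v (x + y)" using x y unfolding W_def by (auto simp: smult_add_distrib_vec)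
    finally show "x + y \<in> W" using x y unfolding W_def by auto
  next
    fix d x assume x: "x \<in> W"
    have "?A *\<^sub>v (d \<cdot>\<^sub>v x) = d \<cdot>\<^sub>v (?A *\<^sub>v x)" using x A unfolding W_def by (auto simp: mult_mat_vec)
    also have "\<dots> = c \<cdot>\<^sub>v (d \<cdot>\<^sub>v x)" using x unfolding W_def by (auto simp: smult_smult_assoc mult.commute)
    finally show "d \<cdot>\<^sub>v x \<in> W" using x unfolding W_def by auto
  qed
  have inv: "\<forall>h \<in> carrier G. \<forall>w \<in> W. \<rho> h *\<^sub>v w \<in> W"
  proof (intro ballI)
    fix h w assume h: "h \<in> carrier G" and w: "w \<in> W"
    have wc: "w \<in> carrier_vec n" using w unfolding W_def by auto
    have "?A *\<^sub>v (\<rho> h *\<^sub>v w) = (?A * \<rho> h) *\<^sub>v w" using A car[OF h] wc by (simp add: assoc_mult_mat_vec)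
    also have "\<dots> = (\<rho> h * ?A) *\<^sub>v w" using comm[OF h] by simp
    also have "\<dots> = \<rho> h *\<^sub>v (?A *\<^sub>v w)" using A car[OF h] wc by (simp add: assoc_mult_mat_vec)
    also have "\<dots> = \<rho> h *\<^sub>v (c \<cdot>\<^sub>v w)" using w unfolding W_def by simp
    also have "\<dots> = c \<cdot>\<^sub>v (\<rho> h *\<^sub>v w)" using car[OF h] wc by (simp add: mult_mat_vec)
    finally show "\<rho> h *\<^sub>v w \<in> W" using car[OF h] wc unfolding W_def by auto
  qed
  have "v \<in> W" using vc unfolding W_def by auto
  hence WC: "W = carrier_vec n" using irrW[OF sub inv] vc by auto
  have "?A = c \<cdot>\<^sub>m 1\<^sub>m n"
  proof (rule eq_matI)
    fix i j assume "i < dim_row (c \<cdot>\<^sub>m 1\<^sub>m n)" "j < dim_col (c \<cdot>\<^sub>m 1\<^sub>m n)"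
    hence ij: "i < n" "j < n" by auto
    have "unit_vec n j \<in> W" using WC by simp
    hence "?A *\<^sub>v unit_vec n j = c \<cdot>\<^sub>v unit_vec n j" unfolding W_def by auto
    hence "(?A *\<^sub>v unit_vec n j) $ i = c * (if i = j then 1 else 0)" using ij by simp
    thus "?A $$ (i,j) = (c \<cdot>\<^sub>m 1\<^sub>m n) $$ (i,j)" using mult_unit_vec_index[OF A ij] ij by simp
  qed (use A in auto)
  thus ?thesis by blast
qed

lemma scalar_rep_unit:
  assumes grp: "group G" and fin: "finite (carrier G)" and rep: "is_rep G n \<rho>" and g: "g \<in> carrier G"
    and c: "\<rho> g = c \<cdot>\<^sub>m 1\<^sub>m n"
  shows "cmod c = 1"
proof -
  have n: "n \<ge> 1" using rep unfolding is_rep_def by auto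
  let ?k = "card (carrier G)"
  have "(c ^ ?k) \<cdot>\<^sub>m (1\<^sub>m n :: complex mat) = 1\<^sub>m n"
    using rep_order_pow[OF grp fin rep g] c smult_one_pow by metis
  hence "((c ^ ?k) \<cdot>\<^sub>m (1\<^sub>m n :: complex mat)) $$ (0,0) = (1\<^sub>m n :: complex mat) $$ (0,0)" by simp
  hence ck: "c ^ ?k = 1" using n by simp
  have k: "?k > 0" using card_carrier_pos[OF grp fin] .
  have "cmod c ^ ?k = 1 ^ ?k" using ck by (metis norm_power norm_one power_one)
  thus ?thesis using k by (metis norm_ge_zero power_eq_imp_eq_base zero_le_one)
qed


lemma mat_of_cols_unit:
  fixes L :: "complex vec list"
  assumes L: "set L \<subseteq> carrier_vec n" and j: "j < length L"
  shows "mat_of_cols n L *\<^sub>v unit_vec (length L) j = L ! j"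
proof (rule eq_vecI)
  show "dim_vec (mat_of_cols n L *\<^sub>v unit_vec (length L) j) = dim_vec (L ! j)"
  proof -
    have "L ! j \<in> carrier_vec n" using L j nth_mem by blast
    thus ?thesis by simp
  qed
  fix i assume "i < dim_vec (L ! j)"
  hence i: "i < n" using L j by (metis carrier_vecD nth_mem subsetD)
  have M: "mat_of_cols n L \<in> carrier_mat n (length L)" by simp
  show "(mat_of_cols n L *\<^sub>v unit_vec (length L) j) $ i = L ! j $ i"
    using mult_unit_vec_index[OF M i j] mat_of_cols_index[OF i j] by simp
qed

lemma block_triangularize:
  fixes W :: "complex vec set"
  assumes sub: "is_subspace n W" and nz: "W \<noteq> {0\<^sub>v n}" and np: "W \<noteq> carrier_vec n"
  shows "\<exists>d P Q. 0 < d \<and> d < n \<and> P \<in> carrier_mat n n \<and> Q \<in> carrier_mat n n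
     \<and> P * Q = 1\<^sub>m n \<and> Q * P = 1\<^sub>m n
     \<and> (\<forall>A \<in> carrier_mat n n. (\<forall>w\<in>W. A *\<^sub>v w \<in> W) \<longrightarrow>
          (\<forall>i j. d \<le> i \<longrightarrow> i < n \<longrightarrow> j < d \<longrightarrow> (Q * A * P) $$ (i,j) = 0))"
proof -
  interpret V: vec_space "TYPE(complex)" n .
  have Wc: "W \<subseteq> carrier_vec n" and W0: "0\<^sub>v n \<in> W"
    and Wadd: "\<And>v w. v \<in> W \<Longrightarrow> w \<in> W \<Longrightarrow> v + w \<in> W"
    and Wsm: "\<And>c v. v \<in> W \<Longrightarrow> c \<cdot>\<^sub>v v \<in> W"
    using sub unfolding is_subspace_def by auto
  have li_empty: "V.lin_indpt {}" unfolding V.lin_dep_def by auto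
  have bound: "\<And>A. A \<subseteq> carrier_vec n \<Longrightarrow> V.lin_indpt A \<Longrightarrow> finite A \<and> card A \<le> n"
    using V.li_le_dim V.fin_dim V.dim_is_n by metis
  obtain S where Sfin: "finite S" and Smax: "maximal S (\<lambda>S. S \<subseteq> W \<and> V.lin_indpt S)"
    using maximal_exists[of "\<lambda>S. S \<subseteq> W \<and> V.lin_indpt S" n "{}"] bound Wc li_empty by blast
  have SW: "S \<subseteq> W" and Sli: "V.lin_indpt S" using Smax unfolding maximal_def by auto
  have Sc: "S \<subseteq> carrier_vec n" using SW Wc by auto
  have subm: "LinearCombinations.submodule class_ring W V.V"
    unfolding LinearCombinations.submodule_def
    using V.module_axioms Wc W0 Wadd Wsm by (auto simp: module_vec_simps class_ring_simps)
  have spanS: "V.span S = W"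
  proof
    show "V.span S \<subseteq> W" by (rule V.span_is_subset[OF SW subm])
    show "W \<subseteq> V.span S"
    proof
      fix w assume w: "w \<in> W"
      show "w \<in> V.span S"
      proof (rule ccontr)
        assume nw: "w \<notin> V.span S"
        have wS: "w \<notin> S" using nw V.in_own_span[OF Sc] by auto
        have wc: "w \<in> carrier_vec n" using w Wc by auto
        have "V.lin_indpt (S \<union> {w})" using V.lin_dep_iff_in_span[OF Sc Sli wc wS] nw by simp
        hence "S \<union> {w} = S" using Smax w SW unfolding maximal_def by blast
        thus False using wS by auto
      qed
    qed
  qed
  have Sne: "S \<noteq> {}" using spanS nz V.span_empty by auto
  obtain T where Tfin: "finite T" and Tmax: "maximal T (\<lambda>T. S \<subseteq> T \<and> T \<subseteq> carrier_vec n \<and> V.lin_indpt T)"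
    using maximal_exists[of "\<lambda>T. S \<subseteq> T \<and> T \<subseteq> carrier_vec n \<and> V.lin_indpt T" n S] bound Sc Sli by blast
  have ST: "S \<subseteq> T" and Tc: "T \<subseteq> carrier_vec n" and Tli: "V.lin_indpt T" using Tmax unfolding maximal_def by auto
  have "maximal T (\<lambda>T. T \<subseteq> carrier_vec n \<and> V.lin_indpt T)"
    using Tmax unfolding maximal_def by (metis order_trans ST)
  hence Tbasis: "V.basis T" by (rule V.max_li_is_basis)
  have cardT: "card T = n" using V.dim_basis[OF Tfin Tbasis] V.dim_is_n by simp
  have spanT: "V.span T = carrier_vec n" using Tbasis unfolding V.basis_def by auto
  have STne: "S \<noteq> T" using spanS spanT np by auto
  obtain ws where ws: "set ws = S" "distinct ws" using finite_distinct_list[OF Sfin] by auto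
  obtain us where us: "set us = T - S" "distinct us" using finite_distinct_list[of "T - S"] Tfin by auto
  define L where "L = ws @ us"
  have Ldist: "distinct L" and Lset: "set L = T" using ws us ST unfolding L_def by auto
  have Llen: "length L = n" using distinct_card[OF Ldist] Lset cardT by simp
  define d where "d = length ws"
  have dS: "d = card S" using distinct_card[OF ws(2)] ws(1) d_def by simp
  have d0: "0 < d" using dS Sne Sfin by (simp add: card_gt_0_iff)
  have dn: "d < n" using dS cardT STne ST Tfin by (metis card_subset_eq psubset_card_mono psubsetI)
  have Lc: "set L \<subseteq> carrier_vec n" using Lset Tc by simp
  define P where "P = mat_of_cols n L"
  have P: "P \<in> carrier_mat n n" unfolding P_def using Llen mat_of_cols_carrier(1)[of n L] by simp
  have Ldim: "\<forall>w\<in>set L. dim_vec w = n" using Lc by auto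
  have coordT: "\<exists>c. c \<in> carrier_vec n \<and> P *\<^sub>v c = v \<and> (\<forall>i. d \<le> i \<longrightarrow> i < n \<longrightarrow> c $ i = 0)"
    if v: "v \<in> W" for v
  proof -
    obtain a where a: "V.lincomb a S = v" using V.finite_in_span[OF Sfin Sc] v spanS by auto
    define b where "b x = (if x \<in> S then a x else 0)" for x
    have "V.lincomb b T = V.lincomb b (T - S) + V.lincomb b S"
      using V.lincomb_vec_diff_add[OF Tc ST Tfin] by simp
    also have "V.lincomb b (T - S) = 0\<^sub>v n" using Tc by (intro V.lincomb_zero) (auto simp: b_def)
    also have "V.lincomb b S = V.lincomb a S" using Sc by (intro V.lincomb_cong) (auto simp: b_def)
    finally have "V.lincomb b T = v" using a v Wc by auto
    moreover have "V.lincomb b T = V.lincomb_list (\<lambda>i. b (L ! i)) L"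
      using V.lincomb_as_lincomb_list_distinct[OF Lc Ldist] Lset by simp
    moreover have "V.lincomb_list (\<lambda>i. b (L ! i)) L = P *\<^sub>v vec n (\<lambda>i. b (L ! i))"
      using V.lincomb_list_as_mat_mult[OF Ldim] Llen unfolding P_def by simp
    moreover have "vec n (\<lambda>i. b (L ! i)) $ i = 0" if "d \<le> i" "i < n" for i
    proof -
      have "L ! i \<in> set us" using that Llen unfolding L_def d_def by (simp add: nth_append)
      hence "L ! i \<notin> S" using us by auto
      thus ?thesis using that by (simp add: b_def)
    qed
    ultimately show ?thesis by (intro exI[of _ "vec n (\<lambda>i. b (L ! i))"]) auto
  qed
  have coordAll: "\<exists>c. c \<in> carrier_vec n \<and> P *\<^sub>v c = v" if v: "v \<in> carrier_vec n" for v
  proof -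
    obtain a where a: "V.lincomb a T = v" using V.finite_in_span[OF Tfin Tc] v spanT by auto
    moreover have "V.lincomb a T = V.lincomb_list (\<lambda>i. a (L ! i)) L"
      using V.lincomb_as_lincomb_list_distinct[OF Lc Ldist] Lset by simp
    moreover have "V.lincomb_list (\<lambda>i. a (L ! i)) L = P *\<^sub>v vec n (\<lambda>i. a (L ! i))"
      using V.lincomb_list_as_mat_mult[OF Ldim] Llen unfolding P_def by simp
    ultimately show ?thesis by (intro exI[of _ "vec n (\<lambda>i. a (L ! i))"]) auto
  qed
  define q where "q j = (SOME c. c \<in> carrier_vec n \<and> P *\<^sub>v c = unit_vec n j)" for j
  have q: "q j \<in> carrier_vec n \<and> P *\<^sub>v q j = unit_vec n j" for j
    unfolding q_def by (rule someI_ex) (rule coordAll, simp)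
  define Q where "Q = mat_of_cols n (map q [0..<n])"
  have Q: "Q \<in> carrier_mat n n" unfolding Q_def using mat_of_cols_carrier(1)[of n "map q [0..<n]"] by simp
  have PQ: "P * Q = 1\<^sub>m n"
  proof (rule eq_matI)
    fix i j assume "i < dim_row (1\<^sub>m n)" "j < dim_col (1\<^sub>m n)"
    hence ij: "i < n" "j < n" by auto
    have "col (P * Q) j = P *\<^sub>v col Q j" using col_mult2[OF P Q ij(2)] .
    also have "col Q j = q j" unfolding Q_def using ij q by (simp add: col_mat_of_cols)
    finally have "col (P * Q) j = unit_vec n j" using q by simp
    hence "col (P * Q) j $ i = unit_vec n j $ i" by simp
    thus "(P * Q) $$ (i,j) = 1\<^sub>m n $$ (i,j)" using ij P Q by simp
  qed (use P Q in auto)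
  have QP: "Q * P = 1\<^sub>m n" by (rule mat_mult_left_right_inverse[OF P Q PQ])
  have block: "(Q * A * P) $$ (i,j) = 0"
    if A: "A \<in> carrier_mat n n" and inv: "\<forall>w\<in>W. A *\<^sub>v w \<in> W" and i: "d \<le> i" "i < n" and j: "j < d" for A i j
  proof -
    have jn: "j < n" using j dn by simp
    have Lj: "L ! j = ws ! j" using j unfolding L_def d_def by (simp add: nth_append)
    have wsW: "ws ! j \<in> W" using j ws SW unfolding d_def by auto
    have Pe: "P *\<^sub>v unit_vec n j = L ! j" using mat_of_cols_unit[OF Lc, of j] Llen jn unfolding P_def by simp
    have "A *\<^sub>v (L ! j) \<in> W" using inv wsW Lj by simp
    then obtain c where c: "c \<in> carrier_vec n" "P *\<^sub>v c = A *\<^sub>v (L ! j)" "\<forall>i. d \<le> i \<longrightarrow> i < n \<longrightarrow> c $ i = 0"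
      using coordT by blast
    have QAP: "Q * A * P \<in> carrier_mat n n" using Q A P by simp
    have "(Q * A * P) $$ (i,j) = ((Q * A * P) *\<^sub>v unit_vec n j) $ i" using mult_unit_vec_index[OF QAP i(2) jn] by simp
    also have "(Q * A * P) *\<^sub>v unit_vec n j = Q *\<^sub>v (A *\<^sub>v (P *\<^sub>v unit_vec n j))"
    proof -
      have AP: "A * P \<in> carrier_mat n n" using A P by simp
      have "(Q * A * P) *\<^sub>v unit_vec n j = (Q * A) *\<^sub>v (P *\<^sub>v unit_vec n j)"
        using Q A P by (intro assoc_mult_mat_vec) auto
      also have "\<dots> = Q *\<^sub>v (A *\<^sub>v (P *\<^sub>v unit_vec n j))"
        using Q A P by (intro assoc_mult_mat_vec) auto
      finally show ?thesis .
    qed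
    also have "\<dots> = Q *\<^sub>v (P *\<^sub>v c)" using Pe c by simp
    also have "\<dots> = (Q * P) *\<^sub>v c" using Q P c by (simp add: assoc_mult_mat_vec)
    also have "\<dots> = c" using QP c by simp
    finally show ?thesis using c i by simp
  qed
  show ?thesis using d0 dn P Q PQ QP block by blast
qed


lemma sum_split_shift:
  fixes f :: "nat \<Rightarrow> 'a::comm_monoid_add"
  assumes "d \<le> n"
  shows "(\<Sum>l<n. f l) = (\<Sum>l<d. f l) + (\<Sum>l<n-d. f (l + d))"
proof -
  have "(\<Sum>l<n. f l) = (\<Sum>l\<in>{0..<d}. f l) + (\<Sum>l\<in>{d..<n}. f l)"
    using assms by (simp add: lessThan_atLeast0 sum.atLeastLessThan_concat)
  also have "(\<Sum>l\<in>{d..<n}. f l) = (\<Sum>l\<in>{0..<n-d}. f (l + d))"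
    using sum.shift_bounds_nat_ivl[of f 0 d "n-d"] assms by simp
  finally show ?thesis by (simp add: lessThan_atLeast0)
qed

definition blk_ut :: "nat \<Rightarrow> nat \<Rightarrow> complex mat \<Rightarrow> bool" where
  "blk_ut n d M1 \<longleftrightarrow> M1 \<in> carrier_mat n n \<and> (\<forall>i j. d \<le> i \<longrightarrow> i < n \<longrightarrow> j < d \<longrightarrow> M1 $$ (i,j) = 0)"

lemma blk_mult_index:
  assumes M1: "M1 \<in> carrier_mat n n" and M2: "M2 \<in> carrier_mat n n" and i: "i < n" and j: "j < n"
  shows "(M1 * M2) $$ (i,j) = (\<Sum>l<n. M1 $$ (i,l) * M2 $$ (l,j))"
  using M1 M2 i j by (simp add: scalar_prod_def lessThan_atLeast0)

lemma blk_mult: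
  assumes bM1: "blk_ut n d M1" and bM2: "blk_ut n d M2" and dn: "d \<le> n"
  shows "blk_ut n d (M1 * M2)"
    and "\<And>i j. i < d \<Longrightarrow> j < d \<Longrightarrow> (M1 * M2) $$ (i,j) = (\<Sum>l<d. M1 $$ (i,l) * M2 $$ (l,j))"
    and "\<And>i j. i < n - d \<Longrightarrow> j < n - d \<Longrightarrow> (M1 * M2) $$ (i+d,j+d) = (\<Sum>l<n-d. M1 $$ (i+d,l+d) * M2 $$ (l+d,j+d))"
proof -
  have M1: "M1 \<in> carrier_mat n n" and M10: "\<And>i j. d \<le> i \<Longrightarrow> i < n \<Longrightarrow> j < d \<Longrightarrow> M1 $$ (i,j) = 0"
    using bM1 unfolding blk_ut_def by auto
  have M2: "M2 \<in> carrier_mat n n" and M20: "\<And>i j. d \<le> i \<Longrightarrow> i < n \<Longrightarrow> j < d \<Longrightarrow> M2 $$ (i,j) = 0"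
    using bM2 unfolding blk_ut_def by auto
  show "blk_ut n d (M1 * M2)" unfolding blk_ut_def
  proof (intro conjI allI impI)
    show "M1 * M2 \<in> carrier_mat n n" using M1 M2 by simp
    fix i j assume i: "d \<le> i" "i < n" and j: "j < d"
    have "(M1 * M2) $$ (i,j) = (\<Sum>l<n. M1 $$ (i,l) * M2 $$ (l,j))" using blk_mult_index[OF M1 M2] i j dn by simp
    also have "\<dots> = (\<Sum>l<d. M1 $$ (i,l) * M2 $$ (l,j)) + (\<Sum>l<n-d. M1 $$ (i,l+d) * M2 $$ (l+d,j))"
      by (rule sum_split_shift[OF dn])
    also have "\<dots> = 0" using M10 M20 i j by simp
    finally show "(M1 * M2) $$ (i,j) = 0" .
  qed
  fix i j
  assume i: "i < d" and j: "j < d"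
  have "(M1 * M2) $$ (i,j) = (\<Sum>l<n. M1 $$ (i,l) * M2 $$ (l,j))" using blk_mult_index[OF M1 M2] i j dn by simp
  also have "\<dots> = (\<Sum>l<d. M1 $$ (i,l) * M2 $$ (l,j)) + (\<Sum>l<n-d. M1 $$ (i,l+d) * M2 $$ (l+d,j))"
    by (rule sum_split_shift[OF dn])
  also have "(\<Sum>l<n-d. M1 $$ (i,l+d) * M2 $$ (l+d,j)) = 0" using M20 j by simp
  finally show "(M1 * M2) $$ (i,j) = (\<Sum>l<d. M1 $$ (i,l) * M2 $$ (l,j))" by simp
next
  have M1: "M1 \<in> carrier_mat n n" and M10: "\<And>i j. d \<le> i \<Longrightarrow> i < n \<Longrightarrow> j < d \<Longrightarrow> M1 $$ (i,j) = 0"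
    using bM1 unfolding blk_ut_def by auto
  have M2: "M2 \<in> carrier_mat n n"
    using bM2 unfolding blk_ut_def by auto
  fix i j
  assume i: "i < n - d" and j: "j < n - d"
  have "(M1 * M2) $$ (i+d,j+d) = (\<Sum>l<n. M1 $$ (i+d,l) * M2 $$ (l,j+d))" using blk_mult_index[OF M1 M2] i j dn by simp
  also have "\<dots> = (\<Sum>l<d. M1 $$ (i+d,l) * M2 $$ (l,j+d)) + (\<Sum>l<n-d. M1 $$ (i+d,l+d) * M2 $$ (l+d,j+d))"
    by (rule sum_split_shift[OF dn])
  also have "(\<Sum>l<d. M1 $$ (i+d,l) * M2 $$ (l,j+d)) = 0" using M10 i by simp
  finally show "(M1 * M2) $$ (i+d,j+d) = (\<Sum>l<n-d. M1 $$ (i+d,l+d) * M2 $$ (l+d,j+d))" by simp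
qed

definition blk1 :: "nat \<Rightarrow> complex mat \<Rightarrow> complex mat" where
  "blk1 d M1 = mat d d (\<lambda>(i,j). M1 $$ (i,j))"

definition blk2 :: "nat \<Rightarrow> nat \<Rightarrow> complex mat \<Rightarrow> complex mat" where
  "blk2 n d M1 = mat (n-d) (n-d) (\<lambda>(i,j). M1 $$ (i+d,j+d))"

lemma blk1_mult: "blk_ut n d M1 \<Longrightarrow> blk_ut n d M2 \<Longrightarrow> d \<le> n \<Longrightarrow> blk1 d (M1 * M2) = blk1 d M1 * blk1 d M2"
  by (rule eq_matI) (auto simp: blk1_def blk_mult(2) scalar_prod_def lessThan_atLeast0 intro!: sum.cong)

lemma blk2_mult: "blk_ut n d M1 \<Longrightarrow> blk_ut n d M2 \<Longrightarrow> d \<le> n \<Longrightarrow> blk2 n d (M1 * M2) = blk2 n d M1 * blk2 n d M2"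
  by (rule eq_matI) (auto simp: blk2_def blk_mult(3) scalar_prod_def lessThan_atLeast0 intro!: sum.cong)

lemma blk_one: "blk1 d (1\<^sub>m n) = 1\<^sub>m d" "blk2 n d (1\<^sub>m n) = 1\<^sub>m (n - d)" if "d \<le> n"
  using that by (auto intro!: eq_matI simp: blk1_def blk2_def)

lemma blk_trace:
  assumes "M1 \<in> carrier_mat n n" "d \<le> n"
  shows "mat_trace M1 = mat_trace (blk1 d M1) + mat_trace (blk2 n d M1)"
  using assms sum_split_shift[OF assms(2), of "\<lambda>i. M1 $$ (i,i)"]
  by (simp add: mat_trace_def blk1_def blk2_def)

lemma conj_rep:
  assumes rep: "is_rep G n \<rho>" and P: "P \<in> carrier_mat n n" and Q: "Q \<in> carrier_mat n n"
    and PQ: "P * Q = 1\<^sub>m n" and QP: "Q * P = 1\<^sub>m n"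
  shows "is_rep G n (\<lambda>g. Q * \<rho> g * P)"
    and "\<And>g. g \<in> carrier G \<Longrightarrow> mat_trace (Q * \<rho> g * P) = mat_trace (\<rho> g)"
proof -
  have car: "\<And>g. g \<in> carrier G \<Longrightarrow> \<rho> g \<in> carrier_mat n n" using rep_carrier[OF rep] .
  show "is_rep G n (\<lambda>g. Q * \<rho> g * P)" unfolding is_rep_def
  proof (intro conjI ballI)
    show "1 \<le> n" using rep unfolding is_rep_def by auto
    fix g assume g: "g \<in> carrier G" show "Q * \<rho> g * P \<in> carrier_mat n n" using car[OF g] P Q by simp
  next
    show "Q * \<rho> \<one>\<^bsub>G\<^esub> * P = 1\<^sub>m n" using rep_one[OF rep] Q QP by simp
  next
    fix g h assume g: "g \<in> carrier G" and h: "h \<in> carrier G"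
    have "Q * \<rho> (g \<otimes>\<^bsub>G\<^esub> h) * P = Q * (\<rho> g * \<rho> h) * P" using rep_mult[OF rep g h] by simp
    also have "\<dots> = Q * (\<rho> g * (P * Q) * \<rho> h) * P" using PQ car[OF g] by simp
    also have "\<dots> = (Q * \<rho> g * P) * (Q * \<rho> h * P)"
      using car[OF g] car[OF h] P Q by (simp add: assoc_mult_mat[of _ n n _ n _ n])
    finally show "Q * \<rho> (g \<otimes>\<^bsub>G\<^esub> h) * P = (Q * \<rho> g * P) * (Q * \<rho> h * P)" .
  qed
  fix g assume g: "g \<in> carrier G"
  have "mat_trace (Q * \<rho> g * P) = mat_trace (Q * (\<rho> g * P))" using car[OF g] P Q by (simp add: assoc_mult_mat[of _ n n _ n _ n])
  also have "\<dots> = mat_trace ((\<rho> g * P) * Q)" using car[OF g] P Q by (intro mat_trace_mult_comm) auto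
  also have "(\<rho> g * P) * Q = \<rho> g" using car[OF g] P Q PQ by (simp add: assoc_mult_mat[of _ n n _ n _ n])
  finally show "mat_trace (Q * \<rho> g * P) = mat_trace (\<rho> g)" .
qed

lemma split_rep:
  assumes rep: "is_rep G n \<rho>" and d: "0 < d" "d < n"
    and ut: "\<And>g. g \<in> carrier G \<Longrightarrow> blk_ut n d (\<rho> g)"
  shows "is_rep G d (\<lambda>g. blk1 d (\<rho> g))" "is_rep G (n - d) (\<lambda>g. blk2 n d (\<rho> g))"
proof -
  have car: "\<And>g. g \<in> carrier G \<Longrightarrow> \<rho> g \<in> carrier_mat n n" using rep_carrier[OF rep] .
  show "is_rep G d (\<lambda>g. blk1 d (\<rho> g))" unfolding is_rep_def
    using d rep_one[OF rep] blk_one[of d n] blk1_mult[OF ut ut] rep_mult[OF rep]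
    by (auto simp: blk1_def)
  show "is_rep G (n - d) (\<lambda>g. blk2 n d (\<rho> g))" unfolding is_rep_def
    using d rep_one[OF rep] blk_one[of d n] blk2_mult[OF ut ut] rep_mult[OF rep]
    by (auto simp: blk2_def)
qed


lemma exists_irr_from_rep:
  assumes rep0: "is_rep G n0 \<rho>0" and triv0: "\<forall>x\<in>N. \<rho>0 x = 1\<^sub>m n0"
    and g0: "g0 \<in> carrier G" and tr0: "mat_trace (\<rho>0 g0) \<noteq> of_nat n0"
  shows "\<exists>n \<rho>. is_irr_rep G n \<rho> \<and> (\<forall>x\<in>N. \<rho> x = 1\<^sub>m n) \<and> (\<exists>g\<in>carrier G. mat_trace (\<rho> g) \<noteq> of_nat n)"
proof -
  define Pr where "Pr n \<longleftrightarrow> (\<exists>\<rho>. is_rep G n \<rho> \<and> (\<forall>x\<in>N. \<rho> x = 1\<^sub>m n) \<and> (\<exists>g\<in>carrier G. mat_trace (\<rho> g) \<noteq> of_nat n))" for n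
  have "Pr n0" unfolding Pr_def using rep0 triv0 g0 tr0 by blast
  define m where "m = (LEAST n. Pr n)"
  have "Pr m" unfolding m_def by (rule LeastI[of Pr n0]) fact
  then obtain \<rho> where rep: "is_rep G m \<rho>" and triv: "\<forall>x\<in>N. \<rho> x = 1\<^sub>m m"
    and ex: "\<exists>g\<in>carrier G. mat_trace (\<rho> g) \<noteq> of_nat m" unfolding Pr_def by blast
  have minimal: "\<not> Pr k" if "k < m" for k using not_less_Least[of k Pr] that unfolding m_def by blast
  have car: "\<And>g. g \<in> carrier G \<Longrightarrow> \<rho> g \<in> carrier_mat m m" using rep_carrier[OF rep] .
  have "is_irr_rep G m \<rho>" unfolding is_irr_rep_def
  proof (intro conjI allI impI rep)
    fix W assume "is_subspace m W \<and> (\<forall>g\<in>carrier G. \<forall>w\<in>W. \<rho> g *\<^sub>v w \<in> W)"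
    hence sub: "is_subspace m W" and inv: "\<forall>g\<in>carrier G. \<forall>w\<in>W. \<rho> g *\<^sub>v w \<in> W" by auto
    show "W = {0\<^sub>v m} \<or> W = carrier_vec m"
    proof (rule ccontr)
      assume "\<not> (W = {0\<^sub>v m} \<or> W = carrier_vec m)"
      then obtain d P Q where d: "0 < d" "d < m" and P: "P \<in> carrier_mat m m" and Q: "Q \<in> carrier_mat m m"
        and PQ: "P * Q = 1\<^sub>m m" and QP: "Q * P = 1\<^sub>m m"
        and blk: "\<forall>A \<in> carrier_mat m m. (\<forall>w\<in>W. A *\<^sub>v w \<in> W) \<longrightarrow>
          (\<forall>i j. d \<le> i \<longrightarrow> i < m \<longrightarrow> j < d \<longrightarrow> (Q * A * P) $$ (i,j) = 0)"
        using block_triangularize[OF sub] by blast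
      define \<sigma> where "\<sigma> g = Q * \<rho> g * P" for g
      have srep: "is_rep G m \<sigma>" unfolding \<sigma>_def by (rule conj_rep(1)[OF rep P Q PQ QP])
      have str: "\<And>g. g \<in> carrier G \<Longrightarrow> mat_trace (\<sigma> g) = mat_trace (\<rho> g)"
        unfolding \<sigma>_def by (rule conj_rep(2)[OF rep P Q PQ QP])
      have ut: "blk_ut m d (\<sigma> g)" if g: "g \<in> carrier G" for g
        unfolding blk_ut_def \<sigma>_def using blk car[OF g] inv g P Q by auto
      have sN: "\<sigma> x = 1\<^sub>m m" if "x \<in> N" for x
        unfolding \<sigma>_def using triv that Q QP by simp
      have r1: "is_rep G d (\<lambda>g. blk1 d (\<sigma> g))" and r2: "is_rep G (m - d) (\<lambda>g. blk2 m d (\<sigma> g))"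
        using split_rep[OF srep d ut] by auto
      have t1: "mat_trace (blk1 d (\<sigma> g)) = of_nat d" if "g \<in> carrier G" for g
      proof (rule ccontr)
        assume "mat_trace (blk1 d (\<sigma> g)) \<noteq> of_nat d"
        hence "Pr d" unfolding Pr_def using r1 that sN blk_one[of d m] d by auto
        thus False using minimal d by auto
      qed
      have t2: "mat_trace (blk2 m d (\<sigma> g)) = of_nat (m - d)" if "g \<in> carrier G" for g
      proof (rule ccontr)
        assume "mat_trace (blk2 m d (\<sigma> g)) \<noteq> of_nat (m - d)"
        hence "Pr (m - d)" unfolding Pr_def using r2 that sN blk_one[of d m] d by auto
        thus False using minimal d by auto
      qed
      from ex obtain g where g: "g \<in> carrier G" "mat_trace (\<rho> g) \<noteq> of_nat m" by auto
      have "mat_trace (\<rho> g) = mat_trace (\<sigma> g)" using str[OF g(1)] by simp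
      also have "\<dots> = mat_trace (blk1 d (\<sigma> g)) + mat_trace (blk2 m d (\<sigma> g))"
        using blk_trace[of "\<sigma> g" m d] ut[OF g(1)] d unfolding blk_ut_def by auto
      also have "\<dots> = of_nat m" using t1[OF g(1)] t2[OF g(1)] d by (simp add: of_nat_add[symmetric])
      finally show False using g by simp
    qed
  qed
  thus ?thesis using triv ex by blast
qed


lemma (in group) coset_rep:
  assumes fin: "finite (carrier G)" and nrm: "N \<lhd> G" and ne: "N \<noteq> carrier G"
  shows "\<exists>n \<rho> g. is_rep G n \<rho> \<and> (\<forall>x\<in>N. \<rho> x = 1\<^sub>m n) \<and> g \<in> carrier G \<and> mat_trace (\<rho> g) \<noteq> of_nat n"
proof -
  have sg: "subgroup N G" using nrm by (simp add: normal_imp_subgroup)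
  have Nc: "N \<subseteq> carrier G" using sg subgroup.subset by blast
  have mulcos: "N #> (g \<otimes> x) = (N #> g) <#> (N #> x)" if "g \<in> carrier G" "x \<in> carrier G" for g x
    using normal.rcos_sum[OF nrm that] by simp
  have finR: "finite (rcosets N)"
  proof -
    have "rcosets N \<subseteq> Pow (carrier G)" unfolding RCOSETS_def r_coset_def using Nc by auto
    thus ?thesis using fin by (meson finite_Pow_iff finite_subset)
  qed
  obtain cs where cs: "set cs = rcosets N" "distinct cs" using finite_distinct_list[OF finR] by auto
  define k where "k = length cs"
  have NR: "N \<in> rcosets N"
  proof -
    have "N #> \<one> = N" using coset_join2[OF one_closed sg] sg subgroup.one_closed by blast
    thus ?thesis using rcosetsI[OF Nc one_closed] by simp
  qed
  have idx: "\<exists>l<k. cs ! l = M" if "M \<in> rcosets N" for M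
    using that cs(1) unfolding k_def by (metis in_set_conv_nth)
  have uniq: "cs ! l = cs ! l' \<longleftrightarrow> l = l'" if "l < k" "l' < k" for l l'
    using nth_eq_iff_index_eq[OF cs(2)] that unfolding k_def by blast
  define rep where "rep j = (SOME x. x \<in> carrier G \<and> cs ! j = N #> x)" for j
  have repj: "rep j \<in> carrier G \<and> cs ! j = N #> rep j" if "j < k" for j
  proof -
    have "cs ! j \<in> rcosets N" using that cs(1) unfolding k_def by (metis nth_mem)
    then obtain x where "x \<in> carrier G" "cs ! j = N #> x" unfolding RCOSETS_def by auto
    hence "\<exists>x. x \<in> carrier G \<and> cs ! j = N #> x" by blast
    thus ?thesis unfolding rep_def by (rule someI_ex)
  qed
  define \<rho> where "\<rho> g = mat k k (\<lambda>(i,j). if cs ! i = N #> (g \<otimes> rep j) then 1 else (0::complex))" for g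
  have k1: "k \<ge> 1" using idx[OF NR] by auto
  have rho_car: "\<rho> g \<in> carrier_mat k k" for g unfolding \<rho>_def by simp
  have e1: "(cs ! i = N #> (\<one> \<otimes> rep j)) \<longleftrightarrow> i = j" if i: "i < k" and j: "j < k" for i j
  proof -
    have "N #> (\<one> \<otimes> rep j) = cs ! j" using repj[OF j] by simp
    thus ?thesis using uniq[OF i j] by metis
  qed
  have rho1: "\<rho> \<one> = 1\<^sub>m k"
    unfolding \<rho>_def by (rule eq_matI) (auto simp: e1)
  have rhoN: "\<rho> x = 1\<^sub>m k" if x: "x \<in> N" for x
  proof -
    have xc: "x \<in> carrier G" using x Nc by auto
    have Nx: "N #> x = N" using coset_join2[OF xc sg x] .
    have eq: "N #> (x \<otimes> rep j) = cs ! j" if j: "j < k" for j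
    proof -
      have "N #> (x \<otimes> rep j) = N <#> (N #> rep j)" using mulcos[OF xc] repj[OF j] Nx by simp
      also have "\<dots> = N #> rep j" using normal.rcosets_mult_eq[OF nrm] rcosetsI[OF Nc] repj[OF j] by simp
      finally show ?thesis using repj[OF j] by simp
    qed
    show ?thesis unfolding \<rho>_def by (rule eq_matI) (auto simp: eq uniq)
  qed
  have rho_mult: "\<rho> (g \<otimes> h) = \<rho> g * \<rho> h" if g: "g \<in> carrier G" and h: "h \<in> carrier G" for g h
  proof (rule eq_matI)
    fix i j assume "i < dim_row (\<rho> g * \<rho> h)" "j < dim_col (\<rho> g * \<rho> h)"
    hence ij: "i < k" "j < k" unfolding \<rho>_def by auto
    have hr: "h \<otimes> rep j \<in> carrier G" using h repj[OF ij(2)] by simp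
    obtain l0 where l0: "l0 < k" "cs ! l0 = N #> (h \<otimes> rep j)" using idx[OF rcosetsI[OF Nc hr]] by auto
    have hcol: "\<rho> h $$ (l, j) = (if l = l0 then 1 else 0)" if l: "l < k" for l
      using l ij l0 uniq[OF l l0(1)] unfolding \<rho>_def by auto
    have "(\<rho> g * \<rho> h) $$ (i,j) = (\<Sum>l<k. \<rho> g $$ (i,l) * \<rho> h $$ (l,j))"
      using blk_mult_index[OF rho_car rho_car ij] .
    also have "\<dots> = (\<Sum>l<k. \<rho> g $$ (i,l) * (if l = l0 then 1 else 0))"
      by (rule sum.cong) (auto simp: hcol)
    also have "\<dots> = \<rho> g $$ (i,l0)" using l0(1) by (simp add: if_distrib sum.delta' cong: if_cong)
    also have "\<dots> = (if cs ! i = N #> (g \<otimes> rep l0) then 1 else 0)" unfolding \<rho>_def using ij l0 by simp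
    also have "N #> (g \<otimes> rep l0) = N #> (g \<otimes> h \<otimes> rep j)"
    proof -
      have "N #> (g \<otimes> rep l0) = (N #> g) <#> (N #> rep l0)" using mulcos[OF g] repj[OF l0(1)] by simp
      also have "N #> rep l0 = N #> (h \<otimes> rep j)" using repj[OF l0(1)] l0(2) by simp
      also have "(N #> g) <#> (N #> (h \<otimes> rep j)) = N #> (g \<otimes> (h \<otimes> rep j))" using mulcos[OF g hr] by simp
      finally show ?thesis using g h repj[OF ij(2)] by (simp add: m_assoc)
    qed
    finally show "\<rho> (g \<otimes> h) $$ (i,j) = (\<rho> g * \<rho> h) $$ (i,j)" unfolding \<rho>_def using ij by simp
  qed (auto simp: \<rho>_def)
  have rep: "is_rep G k \<rho>" unfolding is_rep_def using k1 rho_car rho1 rho_mult by auto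
  obtain g0 where g0: "g0 \<in> carrier G" "g0 \<notin> N" using ne Nc by auto
  obtain i0 where i0: "i0 < k" "cs ! i0 = N" using idx[OF NR] by auto
  have Ng0: "N #> g0 \<noteq> N"
  proof
    assume "N #> g0 = N"
    hence "g0 \<in> N" using rcos_self[OF g0(1) sg] by simp
    thus False using g0 by simp
  qed
  have cond_i0: "cs ! i0 \<noteq> N #> (g0 \<otimes> rep i0)"
  proof -
    have "N #> (g0 \<otimes> rep i0) = (N #> g0) <#> (N #> rep i0)" using mulcos[OF g0(1)] repj[OF i0(1)] by simp
    also have "N #> rep i0 = N #> \<one>" using repj[OF i0(1)] i0(2) coset_join2[OF one_closed sg] sg subgroup.one_closed by metis
    also have "(N #> g0) <#> (N #> \<one>) = N #> g0" using mulcos[OF g0(1) one_closed] g0 by simp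
    finally show ?thesis using i0(2) Ng0 by simp
  qed
  define f where "f i = (if cs ! i = N #> (g0 \<otimes> rep i) then 1 else (0::nat))" for i
  have tr: "mat_trace (\<rho> g0) = of_nat (\<Sum>i<k. f i)"
    unfolding mat_trace_def \<rho>_def f_def by (subst of_nat_sum) (auto intro!: sum.cong)
  have "(\<Sum>i<k. f i) < (\<Sum>i<k. 1)"
    by (rule sum_strict_mono_ex1) (use i0 cond_i0 in \<open>auto simp: f_def\<close>)
  hence "(\<Sum>i<k. f i) \<noteq> k" by simp
  hence "mat_trace (\<rho> g0) \<noteq> of_nat k" unfolding tr by (metis of_nat_eq_iff)
  thus ?thesis using rep rhoN g0 by blast
qed


context group
begin

lemma quot_mult: "Z \<lhd> G \<Longrightarrow> a \<in> carrier G \<Longrightarrow> b \<in> carrier G \<Longrightarrow> (Z #> a) \<otimes>\<^bsub>G Mod Z\<^esub> (Z #> b) = Z #> (a \<otimes> b)"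
  by (simp add: normal.rcos_sum)

lemma quot_carrier: "Z \<lhd> G \<Longrightarrow> a \<in> carrier G \<Longrightarrow> Z #> a \<in> carrier (G Mod Z)"
  by (simp add: FactGroup_def rcosetsI normal_imp_subgroup subgroup.subset)

lemma quot_inv: "Z \<lhd> G \<Longrightarrow> a \<in> carrier G \<Longrightarrow> inv\<^bsub>G Mod Z\<^esub> (Z #> a) = Z #> inv a"
  using normal.inv_FactGroup[of Z G "Z #> a"] quot_carrier normal.rcos_inv by metis

lemma quot_one_iff: "Z \<lhd> G \<Longrightarrow> a \<in> carrier G \<Longrightarrow> Z #> a = Z \<longleftrightarrow> a \<in> Z"
  using rcos_self[of a Z] coset_join2[of a Z] normal_imp_subgroup by metis

lemma quot_elem: "M \<in> carrier (G Mod Z) \<Longrightarrow> \<exists>a \<in> carrier G. M = Z #> a"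
  by (auto simp: FactGroup_def RCOSETS_def)

lemma simple_quot_iff:
  assumes nZ: "Z \<lhd> G" and fin: "finite (carrier G)" and ne: "Z \<noteq> carrier G"
  shows "simple_group (G Mod Z) \<longleftrightarrow> (\<forall>N. N \<lhd> G \<and> Z \<subseteq> N \<longrightarrow> N = Z \<or> N = carrier G)"
proof -
  have sgZ: "subgroup Z G" using nZ normal_imp_subgroup by blast
  have Zc: "Z \<subseteq> carrier G" using subgroup.subset[OF sgZ] .
  have QG: "group (G Mod Z)" using normal.factorgroup_is_group[OF nZ] .
  show ?thesis
  proof
    assume simp: "simple_group (G Mod Z)"
    show "\<forall>N. N \<lhd> G \<and> Z \<subseteq> N \<longrightarrow> N = Z \<or> N = carrier G"
    proof (intro allI impI)
      fix N assume "N \<lhd> G \<and> Z \<subseteq> N"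
      hence nN: "N \<lhd> G" and ZN: "Z \<subseteq> N" by auto
      have sgN: "subgroup N G" using nN normal_imp_subgroup by blast
      have Nc: "N \<subseteq> carrier G" using subgroup.subset[OF sgN] .
      define H where "H = (\<lambda>a. Z #> a) ` N"
      have Hc: "H \<subseteq> carrier (G Mod Z)" unfolding H_def using quot_carrier[OF nZ] Nc by auto
      have "H \<lhd> G Mod Z"
      proof (subst group.normal_inv_iff[OF QG], intro conjI ballI)
        show "subgroup H (G Mod Z)"
        proof (rule subgroup.intro)
          show "H \<subseteq> carrier (G Mod Z)" by (rule Hc)
          have "Z = Z #> \<one>" using Zc by simp
          moreover have "\<one> \<in> N" by (rule subgroup.one_closed[OF sgN])
          ultimately show "\<one>\<^bsub>G Mod Z\<^esub> \<in> H" unfolding H_def one_FactGroup by blast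
        next
          fix x y assume "x \<in> H" "y \<in> H"
          then obtain a b where ab: "a \<in> N" "b \<in> N" "x = Z #> a" "y = Z #> b" unfolding H_def by auto
          have "x \<otimes>\<^bsub>G Mod Z\<^esub> y = Z #> (a \<otimes> b)" using ab Nc quot_mult[OF nZ, of a b] by auto
          moreover have "a \<otimes> b \<in> N" using ab subgroup.m_closed[OF sgN] by blast
          ultimately show "x \<otimes>\<^bsub>G Mod Z\<^esub> y \<in> H" unfolding H_def by blast
        next
          fix x assume "x \<in> H"
          then obtain a where a: "a \<in> N" "x = Z #> a" unfolding H_def by auto
          have "inv\<^bsub>G Mod Z\<^esub> x = Z #> inv a" using a Nc quot_inv[OF nZ, of a] by auto
          moreover have "inv a \<in> N" using a subgroup.m_inv_closed[OF sgN] by blast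
          ultimately show "inv\<^bsub>G Mod Z\<^esub> x \<in> H" unfolding H_def by blast
        qed
      next
        fix x h assume x: "x \<in> carrier (G Mod Z)" and h: "h \<in> H"
        obtain b where b: "b \<in> carrier G" "x = Z #> b" using quot_elem[OF x] by auto
        obtain a where a: "a \<in> N" "h = Z #> a" using h unfolding H_def by auto
        have ac: "a \<in> carrier G" using a Nc by auto
        have "x \<otimes>\<^bsub>G Mod Z\<^esub> h \<otimes>\<^bsub>G Mod Z\<^esub> inv\<^bsub>G Mod Z\<^esub> x = Z #> (b \<otimes> a \<otimes> inv b)"
          using a b ac quot_mult[OF nZ] quot_inv[OF nZ] by simp
        moreover have "b \<otimes> a \<otimes> inv b \<in> N" using nN a b by (simp add: normal.inv_op_closed2)
        ultimately show "x \<otimes>\<^bsub>G Mod Z\<^esub> h \<otimes>\<^bsub>G Mod Z\<^esub> inv\<^bsub>G Mod Z\<^esub> x \<in> H" unfolding H_def by auto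
      qed
      hence "H = carrier (G Mod Z) \<or> H = {\<one>\<^bsub>G Mod Z\<^esub>}"
        using simple_group.no_real_normal_subgroup[OF simp] by blast
      thus "N = Z \<or> N = carrier G"
      proof
        assume HC: "H = carrier (G Mod Z)"
        have "carrier G \<subseteq> N"
        proof
          fix g assume g: "g \<in> carrier G"
          have "Z #> g \<in> H" using HC quot_carrier[OF nZ g] by simp
          then obtain a where a: "a \<in> N" "Z #> g = Z #> a" unfolding H_def by auto
          have "g \<in> Z #> a" using a rcos_self[OF g sgZ] by simp
          then obtain z where z: "z \<in> Z" "g = z \<otimes> a" unfolding r_coset_def by auto
          thus "g \<in> N" using subgroup.m_closed[OF sgN, of z a] ZN a(1) by auto
        qed
        thus ?thesis using Nc by blast
      next
        assume H1: "H = {\<one>\<^bsub>G Mod Z\<^esub>}"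
        have "N \<subseteq> Z"
        proof
          fix a assume a: "a \<in> N"
          hence "Z #> a = Z" using H1 unfolding H_def by auto
          thus "a \<in> Z" using quot_one_iff[OF nZ] a Nc by auto
        qed
        thus ?thesis using ZN by blast
      qed
    qed
  next
    assume all: "\<forall>N. N \<lhd> G \<and> Z \<subseteq> N \<longrightarrow> N = Z \<or> N = carrier G"
    show "simple_group (G Mod Z)"
      unfolding simple_group_def simple_group_axioms_def
    proof (intro conjI allI impI QG)
      obtain g where g: "g \<in> carrier G" "g \<notin> Z" using ne Zc by auto
      have "Z #> g \<noteq> Z" using quot_one_iff[OF nZ g(1)] g by simp
      moreover have "Z \<in> carrier (G Mod Z)" using quot_carrier[OF nZ one_closed] Zc by simp
      moreover have "Z #> g \<in> carrier (G Mod Z)" using quot_carrier[OF nZ g(1)] .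
      moreover have "finite (carrier (G Mod Z))"
      proof -
        have "carrier (G Mod Z) \<subseteq> Pow (carrier G)" unfolding FactGroup_def RCOSETS_def r_coset_def using Zc by auto
        thus ?thesis using fin by (meson finite_Pow_iff finite_subset)
      qed
      ultimately have "card {Z, Z #> g} \<le> card (carrier (G Mod Z))"
        by (intro card_mono) auto
      moreover have "card {Z, Z #> g} = 2" using \<open>Z #> g \<noteq> Z\<close> by simp
      ultimately show "1 < Coset.order (G Mod Z)" unfolding Coset.order_def by simp
    next
      fix H assume nH: "H \<lhd> G Mod Z"
      have sgH: "subgroup H (G Mod Z)" using nH normal_imp_subgroup by blast
      have Hc: "H \<subseteq> carrier (G Mod Z)" using subgroup.subset[OF sgH] .
      define N where "N = {g \<in> carrier G. Z #> g \<in> H}"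
      have Nc: "N \<subseteq> carrier G" unfolding N_def by auto
      have ZN: "Z \<subseteq> N"
      proof
        fix z assume z: "z \<in> Z"
        hence "Z #> z = Z" using quot_one_iff[OF nZ] Zc by auto
        moreover have "Z \<in> H" using subgroup.one_closed[OF sgH] by simp
        ultimately show "z \<in> N" unfolding N_def using z Zc by auto
      qed
      have nN: "N \<lhd> G"
      proof (subst normal_inv_iff, intro conjI ballI)
        show "subgroup N G"
        proof (rule subgroup.intro)
          show "N \<subseteq> carrier G" by (rule Nc)
          show "\<one> \<in> N" using ZN subgroup.one_closed[OF sgZ] by blast
        next
          fix a b assume a: "a \<in> N" and b: "b \<in> N"
          have "Z #> (a \<otimes> b) = (Z #> a) \<otimes>\<^bsub>G Mod Z\<^esub> (Z #> b)" using a b Nc quot_mult[OF nZ] by auto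
          moreover have "(Z #> a) \<otimes>\<^bsub>G Mod Z\<^esub> (Z #> b) \<in> H" using a b subgroup.m_closed[OF sgH] unfolding N_def by blast
          ultimately show "a \<otimes> b \<in> N" unfolding N_def using a b Nc by auto
        next
          fix a assume a: "a \<in> N"
          have "Z #> inv a = inv\<^bsub>G Mod Z\<^esub> (Z #> a)" using a Nc quot_inv[OF nZ] by auto
          moreover have "inv\<^bsub>G Mod Z\<^esub> (Z #> a) \<in> H" using a subgroup.m_inv_closed[OF sgH] unfolding N_def by blast
          ultimately show "inv a \<in> N" unfolding N_def using a Nc by auto
        qed
      next
        fix x a assume x: "x \<in> carrier G" and a: "a \<in> N"
        have ac: "a \<in> carrier G" using a Nc by auto
        have "Z #> (x \<otimes> a \<otimes> inv x) = (Z #> x) \<otimes>\<^bsub>G Mod Z\<^esub> (Z #> a) \<otimes>\<^bsub>G Mod Z\<^esub> inv\<^bsub>G Mod Z\<^esub> (Z #> x)"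
          using x ac quot_mult[OF nZ] quot_inv[OF nZ] by simp
        moreover have "(Z #> x) \<otimes>\<^bsub>G Mod Z\<^esub> (Z #> a) \<otimes>\<^bsub>G Mod Z\<^esub> inv\<^bsub>G Mod Z\<^esub> (Z #> x) \<in> H"
          by (rule normal.inv_op_closed2[OF nH quot_carrier[OF nZ x]]) (use a in \<open>simp add: N_def\<close>)
        ultimately show "x \<otimes> a \<otimes> inv x \<in> N" unfolding N_def using x ac by auto
      qed
      have "N = Z \<or> N = carrier G" using all nN ZN by blast
      thus "H = carrier (G Mod Z) \<or> H = {\<one>\<^bsub>G Mod Z\<^esub>}"
      proof
        assume "N = Z"
        have "H \<subseteq> {Z}"
        proof
          fix M assume M: "M \<in> H"
          obtain a where a: "a \<in> carrier G" "M = Z #> a" using quot_elem Hc M by blast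
          hence "a \<in> N" unfolding N_def using M by auto
          hence "M = Z" using a \<open>N = Z\<close> quot_one_iff[OF nZ] by auto
          thus "M \<in> {Z}" by simp
        qed
        moreover have "Z \<in> H" using subgroup.one_closed[OF sgH] by simp
        ultimately show ?thesis by auto
      next
        assume NC: "N = carrier G"
        have "carrier (G Mod Z) \<subseteq> H"
        proof
          fix M assume "M \<in> carrier (G Mod Z)"
          then obtain a where a: "a \<in> carrier G" "M = Z #> a" using quot_elem by blast
          thus "M \<in> H" using NC unfolding N_def by auto
        qed
        thus ?thesis using Hc by auto
      qed
    qed
  qed
qed

end


context group
begin

lemma center_mem: "z \<in> group_center G \<longleftrightarrow> z \<in> carrier G \<and> (\<forall>g\<in>carrier G. z \<otimes> g = g \<otimes> z)"
  unfolding group_center_def by simp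

lemma comm_iff_center: "comm_group G \<longleftrightarrow> group_center G = carrier G"
proof
  assume cg: "comm_group G"
  interpret C: comm_group G by (rule cg)
  show "group_center G = carrier G" unfolding group_center_def using C.m_comm by auto
next
  assume "group_center G = carrier G"
  hence "\<And>x y. x \<in> carrier G \<Longrightarrow> y \<in> carrier G \<Longrightarrow> x \<otimes> y = y \<otimes> x" using center_mem by blast
  thus "comm_group G" by (rule group_comm_groupI)
qed

lemma center_normal: "group_center G \<lhd> G"
proof (subst normal_inv_iff, intro conjI ballI)
  show "subgroup (group_center G) G"
  proof (rule subgroup.intro)
    show "group_center G \<subseteq> carrier G" unfolding group_center_def by auto
    show "\<one> \<in> group_center G" unfolding center_mem by simp
  next
    fix x y assume x: "x \<in> group_center G" and y: "y \<in> group_center G"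
    have xc: "x \<in> carrier G" and yc: "y \<in> carrier G" using x y center_mem by auto
    show "x \<otimes> y \<in> group_center G" unfolding center_mem
    proof (intro conjI ballI)
      show "x \<otimes> y \<in> carrier G" using xc yc by simp
      fix g assume g: "g \<in> carrier G"
      have xg: "x \<otimes> g = g \<otimes> x" and yg: "y \<otimes> g = g \<otimes> y" using x y g center_mem by auto
      have "x \<otimes> y \<otimes> g = x \<otimes> (y \<otimes> g)" using xc yc g by (rule m_assoc)
      also have "\<dots> = x \<otimes> (g \<otimes> y)" by (simp only: yg)
      also have "\<dots> = (x \<otimes> g) \<otimes> y" using xc yc g by (simp only: m_assoc)
      also have "\<dots> = (g \<otimes> x) \<otimes> y" by (simp only: xg)
      also have "\<dots> = g \<otimes> (x \<otimes> y)" using xc yc g by (simp add: m_assoc)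
      finally show "x \<otimes> y \<otimes> g = g \<otimes> (x \<otimes> y)" .
    qed
  next
    fix x assume x: "x \<in> group_center G"
    have xc: "x \<in> carrier G" using x center_mem by auto
    show "inv x \<in> group_center G" unfolding center_mem
    proof (intro conjI ballI)
      show "inv x \<in> carrier G" using xc by simp
      fix g assume g: "g \<in> carrier G"
      have xg: "x \<otimes> g = g \<otimes> x" using x g center_mem by auto
      have "inv x \<otimes> g = inv x \<otimes> (g \<otimes> x) \<otimes> inv x" using xc g by (simp add: m_assoc)
      also have "\<dots> = inv x \<otimes> (x \<otimes> g) \<otimes> inv x" by (simp only: xg)
      also have "\<dots> = g \<otimes> inv x" using xc g by (simp add: m_assoc[symmetric])
      finally show "inv x \<otimes> g = g \<otimes> inv x" .
    qed
  qed
next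
  fix x h assume x: "x \<in> carrier G" and h: "h \<in> group_center G"
  have hc: "h \<in> carrier G" using h center_mem by auto
  have hx: "h \<otimes> x = x \<otimes> h" using h x center_mem by auto
  have "x \<otimes> h \<otimes> inv x = h \<otimes> x \<otimes> inv x" by (simp only: hx)
  also have "\<dots> = h" using x hc by (simp add: m_assoc)
  finally show "x \<otimes> h \<otimes> inv x \<in> group_center G" using h by simp
qed

end

definition chi_of :: "('a, 'b) monoid_scheme \<Rightarrow> ('a \<Rightarrow> complex mat) \<Rightarrow> 'a \<Rightarrow> complex" where
  "chi_of G \<rho> = (\<lambda>g. if g \<in> carrier G then mat_trace (\<rho> g) else 0)"

lemma irr_in_Irr: "is_irr_rep G n \<rho> \<Longrightarrow> chi_of G \<rho> \<in> Irr G"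
  unfolding Irr_def chi_of_def by blast

lemma Irr_elim: "\<chi> \<in> Irr G \<Longrightarrow> \<exists>n \<rho>. is_irr_rep G n \<rho> \<and> \<chi> = chi_of G \<rho>"
  unfolding Irr_def chi_of_def by blast

lemma chi_one: "group G \<Longrightarrow> is_rep G n \<rho> \<Longrightarrow> chi_of G \<rho> \<one>\<^bsub>G\<^esub> = of_nat n"
  unfolding chi_of_def using rep_one[of G n \<rho>] mat_trace_one by (simp add: group.is_monoid monoid.one_closed)

lemma char_center_eq:
  assumes "group G" "is_rep G n \<rho>"
  shows "char_center G (chi_of G \<rho>) = {g \<in> carrier G. cmod (mat_trace (\<rho> g)) = real n}"
proof -
  have "complex_of_real r = of_nat n \<longleftrightarrow> r = real n" for r
    by (metis of_real_eq_iff of_real_of_nat_eq)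
  thus ?thesis unfolding char_center_def chi_one[OF assms] by (auto simp: chi_of_def)
qed

lemma char_ker_eq:
  assumes "group G" "is_rep G n \<rho>"
  shows "char_ker G (chi_of G \<rho>) = {g \<in> carrier G. mat_trace (\<rho> g) = of_nat n}"
  unfolding char_ker_def chi_one[OF assms] by (auto simp: chi_of_def)

lemma commuting_in_center:
  assumes grp: "group G" and fin: "finite (carrier G)" and irr: "is_irr_rep G n \<rho>" and g: "g \<in> carrier G"
    and comm: "\<And>h. h \<in> carrier G \<Longrightarrow> \<rho> g * \<rho> h = \<rho> h * \<rho> g"
  shows "cmod (mat_trace (\<rho> g)) = real n"
proof -
  have rep: "is_rep G n \<rho>" using irr unfolding is_irr_rep_def by auto
  obtain c where c: "\<rho> g = c \<cdot>\<^sub>m 1\<^sub>m n" using schur_scalar[OF irr g comm] by auto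
  have "cmod c = 1" by (rule scalar_rep_unit[OF grp fin rep g c])
  thus ?thesis using c by (simp add: mat_trace_smult_one norm_mult)
qed

lemma center_scalar:
  assumes grp: "group G" and fin: "finite (carrier G)" and rep: "is_rep G n \<rho>" and g: "g \<in> carrier G"
    and tr: "cmod (mat_trace (\<rho> g)) = real n"
  shows "\<exists>c. \<rho> g = c \<cdot>\<^sub>m 1\<^sub>m n"
proof -
  have n: "n > 0" using rep unfolding is_rep_def by auto
  show ?thesis using scalar_of_trace[OF rep_carrier[OF rep g] n card_carrier_pos[OF grp fin]
      rep_order_pow[OF grp fin rep g] tr] by blast
qed

lemma center_sub_cc:
  assumes grp: "group G" and fin: "finite (carrier G)" and irr: "is_irr_rep G n \<rho>"
  shows "group_center G \<subseteq> {g \<in> carrier G. cmod (mat_trace (\<rho> g)) = real n}"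
proof
  fix z assume z: "z \<in> group_center G"
  have zc: "z \<in> carrier G" using z unfolding group_center_def by auto
  have rep: "is_rep G n \<rho>" using irr unfolding is_irr_rep_def by auto
  have "\<rho> z * \<rho> h = \<rho> h * \<rho> z" if h: "h \<in> carrier G" for h
    using rep_mult[OF rep zc h] rep_mult[OF rep h zc] z h unfolding group_center_def by auto
  thus "z \<in> {g \<in> carrier G. cmod (mat_trace (\<rho> g)) = real n}"
    using commuting_in_center[OF grp fin irr zc] zc by auto
qed

lemma K_wit:
  assumes grp: "group G" and nc: "\<not> comm_group G" and irr: "is_irr_rep G n \<rho>"
    and sub: "group_center G \<subseteq> {g \<in> carrier G. cmod (mat_trace (\<rho> g)) = real n}"
    and neq: "group_center G \<noteq> {g \<in> carrier G. cmod (mat_trace (\<rho> g)) = real n}"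
    and g: "g \<in> carrier G" and trg: "mat_trace (\<rho> g) \<noteq> of_nat n"
  shows "K_grp G \<noteq> carrier G"
proof -
  have rep: "is_rep G n \<rho>" using irr unfolding is_irr_rep_def by auto
  let ?\<chi> = "chi_of G \<rho>"
  have "?\<chi> \<in> Irr G" by (rule irr_in_Irr[OF irr])
  moreover have "group_center G \<subset> char_center G ?\<chi>" unfolding char_center_eq[OF grp rep] using sub neq by auto
  ultimately have "K_grp G \<subseteq> char_ker G ?\<chi>" unfolding K_grp_def using nc by auto
  moreover have "g \<notin> char_ker G ?\<chi>" unfolding char_ker_eq[OF grp rep] using trg by auto
  ultimately show ?thesis using g by auto
qed


context group
begin

lemma comm_id: "g \<in> carrier G \<Longrightarrow> h \<in> carrier G \<Longrightarrow> (g \<otimes> h \<otimes> inv g \<otimes> inv h) \<otimes> (h \<otimes> g) = g \<otimes> h"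
  by (simp add: m_assoc[symmetric]) (simp add: m_assoc)

lemma comm_id2: "g \<in> carrier G \<Longrightarrow> h \<in> carrier G \<Longrightarrow> g \<otimes> h \<otimes> inv g \<otimes> inv h = (g \<otimes> h) \<otimes> inv (h \<otimes> g)"
  by (simp add: m_assoc inv_mult_group)

lemma comm_id3: "g \<in> carrier G \<Longrightarrow> h \<in> carrier G \<Longrightarrow> (h \<otimes> g) \<otimes> (inv g \<otimes> inv h) = \<one>"
  by (metis inv_mult_group m_closed r_inv)

lemma irr_from_normal:
  assumes fin: "finite (carrier G)" and nN: "N \<lhd> G" and ne: "N \<noteq> carrier G"
  shows "\<exists>n \<rho>. is_irr_rep G n \<rho> \<and> (\<forall>x\<in>N. \<rho> x = 1\<^sub>m n) \<and> (\<exists>g\<in>carrier G. mat_trace (\<rho> g) \<noteq> of_nat n)"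
proof -
  obtain n0 \<rho>0 g0 where "is_rep G n0 \<rho>0" "\<forall>x\<in>N. \<rho>0 x = 1\<^sub>m n0" "g0 \<in> carrier G" "mat_trace (\<rho>0 g0) \<noteq> of_nat n0"
    using coset_rep[OF fin nN ne] by blast
  thus ?thesis by (rule exists_irr_from_rep)
qed

lemma forward:
  assumes fin: "finite (carrier G)" and K: "K_grp G = carrier G" and nc: "\<not> comm_group G"
  shows "quasi_simple G"
proof -
  let ?Z = "group_center G"
  have grp: "group G" by (rule is_group)
  have nZ: "?Z \<lhd> G" by (rule center_normal)
  have sgZ: "subgroup ?Z G" using nZ normal_imp_subgroup by blast
  have ZC: "?Z \<noteq> carrier G" using nc comm_iff_center by simp
  have A: "derived G (carrier G) = carrier G"
  proof (rule ccontr)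
    assume ne: "derived G (carrier G) \<noteq> carrier G"
    obtain n \<rho> where irr: "is_irr_rep G n \<rho>" and triv: "\<forall>x\<in>derived G (carrier G). \<rho> x = 1\<^sub>m n"
      and ex: "\<exists>g\<in>carrier G. mat_trace (\<rho> g) \<noteq> of_nat n"
      using irr_from_normal[OF fin derived_self_is_normal ne] by blast
    have rep: "is_rep G n \<rho>" using irr unfolding is_irr_rep_def by auto
    have car: "\<And>g. g \<in> carrier G \<Longrightarrow> \<rho> g \<in> carrier_mat n n" using rep_carrier[OF rep] .
    have commute: "\<rho> g * \<rho> h = \<rho> h * \<rho> g" if g: "g \<in> carrier G" and h: "h \<in> carrier G" for g h
    proof -
      define c where "c = g \<otimes> h \<otimes> inv g \<otimes> inv h"
      have cD: "c \<in> derived G (carrier G)" unfolding derived_def c_def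
        by (rule generate.incl) (use g h in blast)
      have cc: "c \<in> carrier G" unfolding c_def using g h by simp
      have "\<rho> g * \<rho> h = \<rho> (g \<otimes> h)" using rep_mult[OF rep g h] by simp
      also have "g \<otimes> h = c \<otimes> (h \<otimes> g)" unfolding c_def using comm_id[OF g h] by simp
      also have "\<rho> (c \<otimes> (h \<otimes> g)) = \<rho> c * \<rho> (h \<otimes> g)" using rep_mult[OF rep cc] g h by simp
      also have "\<dots> = \<rho> (h \<otimes> g)"
      proof -
        have hg: "h \<otimes> g \<in> carrier G" using h g by simp
        show ?thesis using triv cD left_mult_one_mat[OF car[OF hg]] by simp
      qed
      also have "\<dots> = \<rho> h * \<rho> g" using rep_mult[OF rep h g] by simp
      finally show ?thesis .
    qed
    have CC: "{g \<in> carrier G. cmod (mat_trace (\<rho> g)) = real n} = carrier G"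
      using commuting_in_center[OF grp fin irr _ commute] by auto
    have "K_grp G \<noteq> carrier G"
      using K_wit[OF grp nc irr center_sub_cc[OF grp fin irr]] CC ZC ex by auto
    thus False using K by simp
  qed
  have B: "simple_group (G Mod ?Z)"
  proof (subst simple_quot_iff[OF nZ fin ZC], intro allI impI)
    fix N assume "N \<lhd> G \<and> ?Z \<subseteq> N"
    hence nN: "N \<lhd> G" and ZN: "?Z \<subseteq> N" by auto
    show "N = ?Z \<or> N = carrier G"
    proof (rule ccontr)
      assume "\<not> (N = ?Z \<or> N = carrier G)"
      hence NZ: "N \<noteq> ?Z" and NC: "N \<noteq> carrier G" by auto
      obtain n \<rho> where irr: "is_irr_rep G n \<rho>" and triv: "\<forall>x\<in>N. \<rho> x = 1\<^sub>m n"
        and ex: "\<exists>g\<in>carrier G. mat_trace (\<rho> g) \<noteq> of_nat n"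
        using irr_from_normal[OF fin nN NC] by blast
      have Nc: "N \<subseteq> carrier G" using nN normal_imp_subgroup subgroup.subset by blast
      obtain x where x: "x \<in> N" "x \<notin> ?Z" using NZ ZN by blast
      have "x \<in> {g \<in> carrier G. cmod (mat_trace (\<rho> x)) = real n}"
        using x triv Nc by (auto simp: mat_trace_one)
      hence "?Z \<noteq> {g \<in> carrier G. cmod (mat_trace (\<rho> g)) = real n}" using x Nc triv by (auto simp: mat_trace_one)
      hence "K_grp G \<noteq> carrier G"
        using K_wit[OF grp nc irr center_sub_cc[OF grp fin irr]] ex by auto
      thus False using K by simp
    qed
  qed
  have C: "\<not> comm_group (G Mod ?Z)"
  proof
    assume cq: "comm_group (G Mod ?Z)"
    interpret Q: comm_group "G Mod ?Z" by (rule cq)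
    have "derived_set G (carrier G) \<subseteq> ?Z"
    proof
      fix c assume "c \<in> derived_set G (carrier G)"
      then obtain g h where g: "g \<in> carrier G" and h: "h \<in> carrier G" and c: "c = g \<otimes> h \<otimes> inv g \<otimes> inv h" by blast
      have "(?Z #> g) \<otimes>\<^bsub>G Mod ?Z\<^esub> (?Z #> h) = (?Z #> h) \<otimes>\<^bsub>G Mod ?Z\<^esub> (?Z #> g)"
        using Q.m_comm quot_carrier[OF nZ g] quot_carrier[OF nZ h] by blast
      hence eq: "?Z #> (g \<otimes> h) = ?Z #> (h \<otimes> g)" using quot_mult[OF nZ] g h by simp
      have "g \<otimes> h \<in> ?Z #> (h \<otimes> g)" using rcos_self[of "g \<otimes> h" ?Z] sgZ g h eq by simp
      hence "(g \<otimes> h) \<otimes> inv (h \<otimes> g) \<in> ?Z" using subgroup.rcos_module_imp[OF sgZ is_group] g h by simp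
      thus "c \<in> ?Z" using comm_id2[OF g h] c by simp
    qed
    hence "derived G (carrier G) \<subseteq> ?Z" unfolding derived_def by (rule generate_subgroup_incl[OF _ sgZ])
    thus False using A ZC sgZ subgroup.subset by blast
  qed
  show ?thesis unfolding quasi_simple_def using A B C by blast
qed

lemma backward:
  assumes fin: "finite (carrier G)" and qs: "quasi_simple G"
  shows "K_grp G = carrier G"
proof (cases "comm_group G")
  case True
  then show ?thesis unfolding K_grp_def by simp
next
  case nc: False
  let ?Z = "group_center G"
  have grp: "group G" by (rule is_group)
  have nZ: "?Z \<lhd> G" by (rule center_normal)
  have ZC: "?Z \<noteq> carrier G" using nc comm_iff_center by simp
  have der: "derived G (carrier G) = carrier G" and simp: "simple_group (G Mod ?Z)"
    using qs unfolding quasi_simple_def by auto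
  have allN: "\<And>N. N \<lhd> G \<Longrightarrow> ?Z \<subseteq> N \<Longrightarrow> N = ?Z \<or> N = carrier G"
    using simple_quot_iff[OF nZ fin ZC] simp by blast
  have main: "carrier G \<subseteq> char_ker G \<chi>" if chi: "\<chi> \<in> Irr G" and ZX: "?Z \<subset> char_center G \<chi>" for \<chi>
  proof -
    obtain n \<rho> where irr: "is_irr_rep G n \<rho>" and chidef: "\<chi> = chi_of G \<rho>" using Irr_elim[OF chi] by blast
    have rep: "is_rep G n \<rho>" using irr unfolding is_irr_rep_def by auto
    have car: "\<And>g. g \<in> carrier G \<Longrightarrow> \<rho> g \<in> carrier_mat n n" using rep_carrier[OF rep] .
    have R: "\<And>g h. g \<in> carrier G \<Longrightarrow> h \<in> carrier G \<Longrightarrow> \<rho> (g \<otimes> h) = \<rho> g * \<rho> h" using rep_mult[OF rep] by simp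
    obtain g0 where g0: "g0 \<in> carrier G" "cmod (mat_trace (\<rho> g0)) = real n" "g0 \<notin> ?Z"
      using ZX unfolding chidef char_center_eq[OF grp rep] by blast
    define S where "S = {g \<in> carrier G. \<forall>h\<in>carrier G. \<rho> (g \<otimes> h) = \<rho> (h \<otimes> g)}"
    have Sc: "S \<subseteq> carrier G" unfolding S_def by auto
    have ZS: "?Z \<subseteq> S" unfolding S_def using center_mem by auto
    have g0S: "g0 \<in> S"
    proof -
      obtain c where c: "\<rho> g0 = c \<cdot>\<^sub>m 1\<^sub>m n" using center_scalar[OF grp fin rep g0(1,2)] by blast
      have "\<rho> (g0 \<otimes> h) = \<rho> (h \<otimes> g0)" if h: "h \<in> carrier G" for h
      proof -
        have "\<rho> (g0 \<otimes> h) = (c \<cdot>\<^sub>m 1\<^sub>m n) * \<rho> h" using R[OF g0(1) h] c by simp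
        also have "\<dots> = c \<cdot>\<^sub>m (1\<^sub>m n * \<rho> h)" using car[OF h] by (intro mult_smult_assoc_mat) auto
        also have "\<dots> = c \<cdot>\<^sub>m \<rho> h" using car[OF h] by simp
        also have "\<dots> = c \<cdot>\<^sub>m (\<rho> h * 1\<^sub>m n)" using car[OF h] by simp
        also have "\<dots> = \<rho> h * (c \<cdot>\<^sub>m 1\<^sub>m n)" using car[OF h] by (intro mult_smult_distrib[symmetric]) auto
        also have "\<dots> = \<rho> (h \<otimes> g0)" using R[OF h g0(1)] c by simp
        finally show ?thesis .
      qed
      thus ?thesis unfolding S_def using g0 by auto
    qed
    have Sm: "\<rho> (g \<otimes> h) = \<rho> (h \<otimes> g)" if "g \<in> S" "h \<in> carrier G" for g h using that unfolding S_def by auto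
    have nS: "S \<lhd> G"
    proof (subst normal_inv_iff, intro conjI ballI)
      show "subgroup S G"
      proof (rule subgroup.intro)
        show "S \<subseteq> carrier G" by (rule Sc)
        show "\<one> \<in> S" unfolding S_def by simp
      next
        fix g g' assume g: "g \<in> S" and g': "g' \<in> S"
        have gc: "g \<in> carrier G" and gc': "g' \<in> carrier G" using g g' Sc by auto
        show "g \<otimes> g' \<in> S" unfolding S_def
        proof (intro CollectI conjI ballI)
          show "g \<otimes> g' \<in> carrier G" using gc gc' by simp
          fix h assume h: "h \<in> carrier G"
          have "\<rho> (g \<otimes> g' \<otimes> h) = \<rho> (g \<otimes> (g' \<otimes> h))" using gc gc' h by (simp add: m_assoc)
          also have "\<dots> = \<rho> ((g' \<otimes> h) \<otimes> g)" using Sm[OF g] gc' h by simp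
          also have "\<dots> = \<rho> (g' \<otimes> (h \<otimes> g))" using gc gc' h by (simp add: m_assoc)
          also have "\<dots> = \<rho> ((h \<otimes> g) \<otimes> g')" using Sm[OF g'] gc h by simp
          also have "\<dots> = \<rho> (h \<otimes> (g \<otimes> g'))" using gc gc' h by (simp add: m_assoc)
          finally show "\<rho> (g \<otimes> g' \<otimes> h) = \<rho> (h \<otimes> (g \<otimes> g'))" .
        qed
      next
        fix g assume g: "g \<in> S"
        have gc: "g \<in> carrier G" using g Sc by auto
        show "inv g \<in> S" unfolding S_def
        proof (intro CollectI conjI ballI)
          show "inv g \<in> carrier G" using gc by simp
          fix h assume h: "h \<in> carrier G"
          define y where "y = inv g \<otimes> h \<otimes> inv g"
          have yc: "y \<in> carrier G" unfolding y_def using gc h by simp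
          have e1: "g \<otimes> y = h \<otimes> inv g" unfolding y_def using gc h by (simp add: m_assoc[symmetric])
          have e2: "y \<otimes> g = inv g \<otimes> h" unfolding y_def using gc h by (simp add: m_assoc)
          show "\<rho> (inv g \<otimes> h) = \<rho> (h \<otimes> inv g)" using Sm[OF g yc] e1 e2 by simp
        qed
      qed
    next
      fix x g assume x: "x \<in> carrier G" and g: "g \<in> S"
      have gc: "g \<in> carrier G" using g Sc by auto
      have conj: "\<rho> (x \<otimes> g \<otimes> inv x) = \<rho> g"
      proof -
        have "\<rho> (x \<otimes> g \<otimes> inv x) = \<rho> x * \<rho> (g \<otimes> inv x)" using R x gc by (simp add: m_assoc)
        also have "\<rho> (g \<otimes> inv x) = \<rho> (inv x \<otimes> g)" using Sm[OF g] x by simp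
        also have "\<rho> x * \<rho> (inv x \<otimes> g) = \<rho> (x \<otimes> (inv x \<otimes> g))" using R x gc by simp
        also have "x \<otimes> (inv x \<otimes> g) = g" using x gc by (simp add: m_assoc[symmetric])
        finally show ?thesis .
      qed
      show "x \<otimes> g \<otimes> inv x \<in> S" unfolding S_def
      proof (intro CollectI conjI ballI)
        show "x \<otimes> g \<otimes> inv x \<in> carrier G" using x gc by simp
        fix h assume h: "h \<in> carrier G"
        have xg: "x \<otimes> g \<otimes> inv x \<in> carrier G" using x gc by simp
        have "\<rho> (x \<otimes> g \<otimes> inv x \<otimes> h) = \<rho> g * \<rho> h" using R[OF xg h] conj by simp
        also have "\<dots> = \<rho> (g \<otimes> h)" using R gc h by simp
        also have "\<dots> = \<rho> (h \<otimes> g)" using Sm[OF g h] .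
        also have "\<dots> = \<rho> h * \<rho> (x \<otimes> g \<otimes> inv x)" using R gc h conj by simp
        also have "\<dots> = \<rho> (h \<otimes> (x \<otimes> g \<otimes> inv x))" using R[OF h xg] by simp
        finally show "\<rho> (x \<otimes> g \<otimes> inv x \<otimes> h) = \<rho> (h \<otimes> (x \<otimes> g \<otimes> inv x))" .
      qed
    qed
    have SC: "S = carrier G" using allN[OF nS ZS] g0S g0(3) by auto
    define Kr where "Kr = {g \<in> carrier G. \<rho> g = 1\<^sub>m n}"
    have sgK: "subgroup Kr G"
    proof (rule subgroup.intro)
      show "Kr \<subseteq> carrier G" unfolding Kr_def by auto
      show "\<one> \<in> Kr" unfolding Kr_def using rep_one[OF rep] by simp
    next
      fix g h assume "g \<in> Kr" "h \<in> Kr"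
      thus "g \<otimes> h \<in> Kr" unfolding Kr_def using R by simp
    next
      fix g assume g: "g \<in> Kr"
      have gc: "g \<in> carrier G" using g unfolding Kr_def by auto
      have "\<rho> (inv g) * \<rho> g = 1\<^sub>m n" using rep_inv(1)[OF grp rep gc] .
      hence "\<rho> (inv g) = 1\<^sub>m n" using g car[of "inv g"] gc unfolding Kr_def by simp
      thus "inv g \<in> Kr" unfolding Kr_def using gc by simp
    qed
    have "derived_set G (carrier G) \<subseteq> Kr"
    proof
      fix c assume "c \<in> derived_set G (carrier G)"
      then obtain g h where g: "g \<in> carrier G" and h: "h \<in> carrier G" and c: "c = g \<otimes> h \<otimes> inv g \<otimes> inv h" by blast
      have "c = (g \<otimes> h) \<otimes> (inv g \<otimes> inv h)" using c g h by (simp add: m_assoc)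
      hence "\<rho> c = \<rho> (g \<otimes> h) * \<rho> (inv g \<otimes> inv h)" using R g h by simp
      also have "\<rho> (g \<otimes> h) = \<rho> (h \<otimes> g)" using Sm g h SC by simp
      also have "\<rho> (h \<otimes> g) * \<rho> (inv g \<otimes> inv h) = \<rho> ((h \<otimes> g) \<otimes> (inv g \<otimes> inv h))" using R g h by simp
      also have "\<dots> = 1\<^sub>m n" using comm_id3[OF g h] rep_one[OF rep] by simp
      finally show "c \<in> Kr" unfolding Kr_def using c g h by simp
    qed
    hence "derived G (carrier G) \<subseteq> Kr" unfolding derived_def by (rule generate_subgroup_incl[OF _ sgK])
    hence "carrier G \<subseteq> Kr" using der by simp
    thus ?thesis unfolding chidef char_ker_eq[OF grp rep] Kr_def by (auto simp: mat_trace_one)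
  qed
  show ?thesis unfolding K_grp_def using nc main by auto
qed

end

theorem lemma2p2:
  fixes G :: "('a, 'b) monoid_scheme"
  assumes "group G" and "finite (carrier G)"
  shows "K_grp G = carrier G \<longleftrightarrow> comm_group G \<or> quasi_simple G"
proof
  assume "K_grp G = carrier G"
  thus "comm_group G \<or> quasi_simple G" using group.forward[OF assms(1) assms(2)] by blast
next
  assume "comm_group G \<or> quasi_simple G"
  thus "K_grp G = carrier G"
  proof
    assume "comm_group G" thus ?thesis unfolding K_grp_def by simp
  next
    assume "quasi_simple G" thus ?thesis using group.backward[OF assms(1) assms(2)] by blast
  qed
qed

end
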